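(* Let $p\in[2,\infty)$. There exists a constant $C=C(a,b,d,K,L,\varrho,p)>0$ such that for every $n\ge\lfloor b-a\rfloor+1$ satisfying $Lh<1$ (with $h=(b-a)/n$) and every $(\eta,f)\in F^\varrho(a,b,d,K,L)$, $$\Bigl(\mathbb{E}\Bigl[\max_{0\le j\le n}\bigl\|z(t_j)-V^j_{S2}\bigr\|^p\Bigr]\Bigr)^{1/p}\le C h^{\varrho+\frac12},$$ where $z$ is the solution of $z'(t)=f(t,z(t))$, $t\in[a,b]$, $z(a)=\eta$, and $V^j_{S2}$ are the values produced by the implicit randomized RK2 scheme (S2).
   Context: Let $-\infty<a<b<\infty$, $d\in\mathbb{Z}_+$, $\varrho\in(0,1]$, $K,L\in(0,\infty)$. The class $F^\varrho=F^\varrho(a,b,d,K,L)$ consists of pairs $(\eta,f)$ with $\eta\in\mathbb{R}^d$, $f\colon[a,b]\times\mathbb{R}^d\to\mathbb{R}^d$ such that: $\|\eta\|\le K$; $f$ is continuous; $\|f(t,x)\|\le K(1+\|x\|)$ for all $(t,x)$; $\|f(t,x)-f(s,x)\|\le L|t-s|^\varrho$ for all $t,s\in[a,b]$, $x\in\mathbb{R}^d$; $\|f(t,x)-f(t,y)\|\le L\|x-y\|$ for all $t\in[a,b]$, $x,y\in\mathbb{R}^d$. For $n\in\mathbb{Z}_+$ put $h=(b-a)/n$, $t_j=a+jh$. Let $\tau_1,\tau_2,\ldots$ be independent random variables uniformly distributed on $[0,1]$ on a complete probability space; $\theta_j=t_{j-1}+h\tau_j$. The implicit randomized RK2 scheme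 (S2) is: $V^0=\eta$, and for $j=1,\ldots,n$: $V^j=V^{j-1}+hf(\theta_j,(1-\tau_j)V^{j-1}+\tau_jV^j)$ (the almost surely unique solution of this implicit equation, which exists when $Lh<1$). *)

theory Defs
  imports "HOL-Probability.Probability"
begin

text \<open>The class F^rho(a,b,d,K,L); the dimension d is the dimension of the
  Euclidean space 'a.\<close>
definition F_class ::
  "real \<Rightarrow> real \<Rightarrow> real \<Rightarrow> real \<Rightarrow> real \<Rightarrow> 'a::euclidean_space \<Rightarrow> (real \<Rightarrow> 'a \<Rightarrow> 'a) \<Rightarrow> bool"
  where "F_class a b rho K L eta f \<longleftrightarrow>
     norm eta \<le> K \<and>
     continuous_on ({a..b} \<times> UNIV) (\<lambda>(t, x). f t x) \<and>
     (\<forall>t\<in>{a..b}. \<forall>x. norm (f t x) \<le> K * (1 + norm x)) \<and>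
     (\<forall>t\<in>{a..b}. \<forall>s\<in>{a..b}. \<forall>x. norm (f t x - f s x) \<le> L * \<bar>t - s\<bar> powr rho) \<and>
     (\<forall>t\<in>{a..b}. \<forall>x y. norm (f t x - f t y) \<le> L * norm (x - y))"

text \<open>The implicit randomized RK2 scheme (S2), for given realizations tau j of
  the random variables (tau 0 is unused; step j uses tau j).\<close>
fun rk2_implicit ::
  "real \<Rightarrow> real \<Rightarrow> (nat \<Rightarrow> real) \<Rightarrow> 'a::euclidean_space \<Rightarrow> (real \<Rightarrow> 'a \<Rightarrow> 'a) \<Rightarrow> nat \<Rightarrow> 'a"
  where
    "rk2_implicit a h tau eta f 0 = eta"
  | "rk2_implicit a h tau eta f (Suc j) =
       (let v = rk2_implicit a h tau eta f j;
            s = tau (Suc j);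
            theta = a + real j * h + h * s
        in THE w. w = v + h *\<^sub>R f theta ((1 - s) *\<^sub>R v + s *\<^sub>R w))"

end

theory Submission
  imports Defs
begin


lemma (in complete_measure) borel_measurable_AE_eq:
  assumes g: "g \<in> borel_measurable M" and ae: "AE x in M. f x = g x"
  shows "f \<in> borel_measurable M"
proof (rule measurableI)
  fix x assume "x \<in> space M" then show "f x \<in> space borel" by simp
next
  fix A :: "'b set" assume A: "A \<in> sets borel"
  have 1: "g -` A \<inter> space M \<in> sets M" using g A by (rule measurable_sets)
  have 2: "AE x in M. x \<in> g -` A \<inter> space M \<longleftrightarrow> x \<in> f -` A \<inter> space M"
    using ae by (rule eventually_mono) auto
  show "f -` A \<inter> space M \<in> sets M"
    by (rule in_sets_AE[OF 2 1]) auto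
qed

lemma (in prob_space) mgf_sum_bound:
  fixes \<xi> :: "nat \<Rightarrow> 'a \<Rightarrow> real"
  assumes indep: "indep_vars (\<lambda>_. borel) \<xi> UNIV"
    and bnd: "\<And>k x. x \<in> space M \<Longrightarrow> \<bar>\<xi> k x\<bar> \<le> \<beta>"
    and E0: "\<And>k. expectation (\<xi> k) = 0"
    and I: "finite I" and l: "l > 0"
  shows "expectation (\<lambda>x. exp (l * (\<Sum>k\<in>I. \<xi> k x))) \<le> exp (l\<^sup>2 * real (card I) * \<beta>\<^sup>2 / 2)"
proof -
  have rv: "\<And>k. random_variable borel (\<xi> k)" using indep unfolding indep_vars_def by blast
  have indI: "indep_vars (\<lambda>_. borel) (\<lambda>k x. exp (l * \<xi> k x)) I"
  proof (rule indep_vars_compose2[OF indep_vars_subset[OF indep]])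
    show "I \<subseteq> UNIV" by simp
    fix i show "(\<lambda>x. exp (l * x)) \<in> borel_measurable borel" by measurable
  qed
  have int: "integrable M (\<lambda>x. exp (l * \<xi> k x))" for k
  proof (rule integrable_const_bound[where B="exp (l * \<beta>)"])
    show "AE x in M. norm (exp (l * \<xi> k x)) \<le> exp (l * \<beta>)"
    proof (rule AE_I2)
      fix x assume x: "x \<in> space M"
      have "l * \<xi> k x \<le> l * \<beta>" using bnd[OF x, of k] l by (intro mult_left_mono) auto
      then show "norm (exp (l * \<xi> k x)) \<le> exp (l * \<beta>)" by simp
    qed
  qed (use rv in simp)
  have one: "expectation (\<lambda>x. exp (l * \<xi> k x)) \<le> exp (l\<^sup>2 * \<beta>\<^sup>2 / 2)" for k
  proof -
    interpret interval_bounded_random_variable M "\<xi> k" "-\<beta>" "\<beta>"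
    proof
      show "random_variable borel (\<xi> k)" by (rule rv)
      show "AE x in M. \<xi> k x \<in> {- \<beta>..\<beta>}"
      proof (rule AE_I2)
        fix x assume x: "x \<in> space M"
        have "\<bar>\<xi> k x\<bar> \<le> \<beta>" by (rule bnd[OF x])
        then show "\<xi> k x \<in> {- \<beta>..\<beta>}" by (simp add: abs_le_iff)
      qed
    qed
    have "nn_integral M (\<lambda>x. exp (l * \<xi> k x)) \<le> ennreal (exp (l\<^sup>2 * (\<beta> - - \<beta>)\<^sup>2 / 8))"
      using Hoeffdings_lemma_nn_integral_0[OF l E0] by simp
    also have "l\<^sup>2 * (\<beta> - - \<beta>)\<^sup>2 / 8 = l\<^sup>2 * \<beta>\<^sup>2 / 2" by (simp add: power2_eq_square)
    finally have "nn_integral M (\<lambda>x. exp (l * \<xi> k x)) \<le> ennreal (exp (l\<^sup>2 * \<beta>\<^sup>2 / 2))" .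
    moreover have "nn_integral M (\<lambda>x. exp (l * \<xi> k x)) = ennreal (expectation (\<lambda>x. exp (l * \<xi> k x)))"
      by (rule nn_integral_eq_integral[OF int]) auto
    ultimately show ?thesis by simp
  qed
  have "expectation (\<lambda>x. exp (l * (\<Sum>k\<in>I. \<xi> k x))) = expectation (\<lambda>x. \<Prod>k\<in>I. exp (l * \<xi> k x))"
    by (simp add: sum_distrib_left exp_sum I)
  also have "\<dots> = (\<Prod>k\<in>I. expectation (\<lambda>x. exp (l * \<xi> k x)))"
    by (rule indep_vars_lebesgue_integral[OF I indI int])
  also have "\<dots> \<le> (\<Prod>k\<in>I. exp (l\<^sup>2 * \<beta>\<^sup>2 / 2))"
    by (rule prod_mono) (use one in \<open>auto intro: integral_nonneg_AE\<close>)
  also have "\<dots> = exp (l\<^sup>2 * real (card I) * \<beta>\<^sup>2 / 2)"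
    by (simp add: exp_of_nat_mult[symmetric] mult_ac)
  finally show ?thesis .
qed

lemma abs_powr_le_exp:
  fixes y q :: real assumes q: "q > 0"
  shows "\<bar>y\<bar> powr q \<le> q powr q * (exp y + exp (- y))"
proof -
  have "\<bar>y\<bar> / q \<le> exp (\<bar>y\<bar> / q)" using exp_ge_add_one_self[of "\<bar>y\<bar> / q"] by linarith
  then have "(\<bar>y\<bar> / q) powr q \<le> exp (\<bar>y\<bar> / q) powr q"
    by (intro powr_mono2) (use q in auto)
  also have "exp (\<bar>y\<bar> / q) powr q = exp \<bar>y\<bar>"
    using q by (simp add: powr_def)
  also have "(\<bar>y\<bar> / q) powr q = \<bar>y\<bar> powr q / q powr q"
    using q by (simp add: powr_divide)
  finally have "\<bar>y\<bar> powr q \<le> q powr q * exp \<bar>y\<bar>"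
    using q by (simp add: divide_le_eq mult.commute)
  also have "exp \<bar>y\<bar> \<le> exp y + exp (- y)"
    by (cases "y \<ge> 0") auto
  finally show ?thesis using q by (simp add: mult_left_mono)
qed

lemma (in prob_space) integrable_bounded:
  fixes f :: "'a \<Rightarrow> real"
  assumes "f \<in> borel_measurable M" and "\<And>x. x \<in> space M \<Longrightarrow> \<bar>f x\<bar> \<le> B"
  shows "integrable M f"
proof (rule integrable_const_bound[where B=B])
  show "AE x in M. norm (f x) \<le> B"
  proof (rule AE_I2)
    fix x assume "x \<in> space M" then show "norm (f x) \<le> B" using assms(2) by simp
  qed
qed (fact assms(1))

lemma (in prob_space) moment_sum_bound:
  fixes \<xi> :: "nat \<Rightarrow> 'a \<Rightarrow> real"
  assumes indep: "indep_vars (\<lambda>_. borel) \<xi> UNIV"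
    and bnd: "\<And>k x. x \<in> space M \<Longrightarrow> \<bar>\<xi> k x\<bar> \<le> \<beta>"
    and E0: "\<And>k. expectation (\<xi> k) = 0"
    and I: "finite I" "I \<noteq> {}" and \<beta>: "\<beta> > 0" and q: "q > 0"
  shows "expectation (\<lambda>x. \<bar>\<Sum>k\<in>I. \<xi> k x\<bar> powr q)
           \<le> 2 * exp (1/2) * q powr q * (real (card I) * \<beta>\<^sup>2) powr (q/2)"
proof -
  have rv: "\<And>k. random_variable borel (\<xi> k)" using indep unfolding indep_vars_def by blast
  define \<sigma> where "\<sigma> = sqrt (real (card I) * \<beta>\<^sup>2)"
  have cI: "real (card I) > 0" using I by auto
  have \<sigma>: "\<sigma> > 0" unfolding \<sigma>_def using cI \<beta> by simp
  have \<sigma>2: "\<sigma>\<^sup>2 = real (card I) * \<beta>\<^sup>2" unfolding \<sigma>_def using cI by simp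
  have \<sigma>q: "\<sigma> powr q = (real (card I) * \<beta>\<^sup>2) powr (q/2)"
    unfolding \<sigma>_def using cI \<beta> by (simp add: powr_half_sqrt[symmetric] powr_powr)
  define S where "S x = (\<Sum>k\<in>I. \<xi> k x)" for x
  have Sm: "S \<in> borel_measurable M" unfolding S_def using rv by measurable
  have Sb: "\<bar>S x\<bar> \<le> real (card I) * \<beta>" if "x \<in> space M" for x
  proof -
    have "\<bar>S x\<bar> \<le> (\<Sum>k\<in>I. \<bar>\<xi> k x\<bar>)" unfolding S_def by (rule sum_abs)
    also have "\<dots> \<le> (\<Sum>k\<in>I. \<beta>)" by (rule sum_mono) (rule bnd[OF that])
    finally show ?thesis by simp
  qed
  have indm: "indep_vars (\<lambda>_. borel) (\<lambda>k x. - \<xi> k x) UNIV"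
  proof (rule indep_vars_compose2[OF indep])
    fix i show "(\<lambda>x::real. - x) \<in> borel_measurable borel"
      by simp
  qed
  have E0m: "expectation (\<lambda>x. - \<xi> k x) = 0" for k using E0[of k] by simp
  have bndm: "\<bar>- \<xi> k x\<bar> \<le> \<beta>" if "x \<in> space M" for k x using bnd[OF that] by simp
  have l: "1 / \<sigma> > 0" using \<sigma> by simp
  have ex: "(1/\<sigma>)\<^sup>2 * real (card I) * \<beta>\<^sup>2 / 2 = 1/2"
    unfolding power_divide \<sigma>2 using cI \<beta> by simp
  have m1: "expectation (\<lambda>x. exp (1/\<sigma> * S x)) \<le> exp (1/2)"
    using mgf_sum_bound[OF indep bnd E0 I(1) l] unfolding S_def ex .
  have m2: "expectation (\<lambda>x. exp (1/\<sigma> * (\<Sum>k\<in>I. - \<xi> k x))) \<le> exp (1/2)"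
    using mgf_sum_bound[OF indm bndm E0m I(1) l] unfolding ex .
  have m2': "expectation (\<lambda>x. exp (- (S x / \<sigma>))) \<le> exp (1/2)"
    using m2 by (simp add: S_def sum_negf)
  have m1': "expectation (\<lambda>x. exp (S x / \<sigma>)) \<le> exp (1/2)"
    using m1 by simp
  have ie1: "integrable M (\<lambda>x. exp (S x / \<sigma>))"
  proof (rule integrable_bounded[where B="exp (real (card I) * \<beta> / \<sigma>)"])
    show "(\<lambda>x. exp (S x / \<sigma>)) \<in> borel_measurable M" using Sm by measurable
    fix x assume x: "x \<in> space M"
    have "S x \<le> real (card I) * \<beta>" using Sb[OF x] by (simp add: abs_le_iff)
    then have "S x / \<sigma> \<le> real (card I) * \<beta> / \<sigma>" using \<sigma> by (simp add: divide_right_mono)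
    then show "\<bar>exp (S x / \<sigma>)\<bar> \<le> exp (real (card I) * \<beta> / \<sigma>)" by simp
  qed
  have ie2: "integrable M (\<lambda>x. exp (- (S x / \<sigma>)))"
  proof (rule integrable_bounded[where B="exp (real (card I) * \<beta> / \<sigma>)"])
    show "(\<lambda>x. exp (- (S x / \<sigma>))) \<in> borel_measurable M" using Sm by measurable
    fix x assume x: "x \<in> space M"
    have "- S x \<le> real (card I) * \<beta>" using Sb[OF x] by (simp add: abs_le_iff)
    then have "(- S x) / \<sigma> \<le> real (card I) * \<beta> / \<sigma>" using \<sigma> by (intro divide_right_mono) auto
    then show "\<bar>exp (- (S x / \<sigma>))\<bar> \<le> exp (real (card I) * \<beta> / \<sigma>)" by simp
  qed
  have ip: "integrable M (\<lambda>x. \<bar>S x\<bar> powr q)"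
  proof (rule integrable_bounded[where B="(real (card I) * \<beta>) powr q"])
    show "(\<lambda>x. \<bar>S x\<bar> powr q) \<in> borel_measurable M" using Sm by measurable
    fix x assume x: "x \<in> space M"
    have "\<bar>S x\<bar> powr q \<le> (real (card I) * \<beta>) powr q"
      by (rule powr_mono2) (use q Sb[OF x] in auto)
    then show "\<bar>\<bar>S x\<bar> powr q\<bar> \<le> (real (card I) * \<beta>) powr q" by simp
  qed
  have pw: "\<bar>S x\<bar> powr q \<le> \<sigma> powr q * (q powr q * (exp (S x / \<sigma>) + exp (- (S x / \<sigma>))))" for x
  proof -
    have e1: "\<bar>S x / \<sigma>\<bar> powr q = \<bar>S x\<bar> powr q / \<sigma> powr q"
      using \<sigma> by (simp add: abs_divide powr_divide)
    have "\<bar>S x\<bar> powr q = \<sigma> powr q * \<bar>S x / \<sigma>\<bar> powr q"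
      unfolding e1 using \<sigma> by simp
    also have "\<dots> \<le> \<sigma> powr q * (q powr q * (exp (S x / \<sigma>) + exp (- (S x / \<sigma>))))"
      by (intro mult_left_mono abs_powr_le_exp q) simp
    finally show ?thesis .
  qed
  have "expectation (\<lambda>x. \<bar>S x\<bar> powr q)
        \<le> expectation (\<lambda>x. \<sigma> powr q * (q powr q * (exp (S x / \<sigma>) + exp (- (S x / \<sigma>)))))"
    by (rule integral_mono[OF ip _ pw]) (intro integrable_mult_right Bochner_Integration.integrable_add ie1 ie2)
  also have "\<dots> = \<sigma> powr q * (q powr q * (expectation (\<lambda>x. exp (S x / \<sigma>)) + expectation (\<lambda>x. exp (- (S x / \<sigma>)))))"
    using ie1 ie2 by simp
  also have "\<dots> \<le> \<sigma> powr q * (q powr q * (exp (1/2) + exp (1/2)))"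
    by (intro mult_left_mono add_mono m1' m2') auto
  finally show ?thesis unfolding S_def \<sigma>q by (simp add: mult_ac)
qed


definition pmax :: "(nat \<Rightarrow> 'a \<Rightarrow> real) \<Rightarrow> nat \<Rightarrow> nat \<Rightarrow> 'a \<Rightarrow> real" where
  "pmax \<xi> s K x = Max ((\<lambda>j. \<bar>\<Sum>k\<in>{s..<s+j}. \<xi> k x\<bar>) ` {0..2^K})"

lemma pmax_ge: "j \<le> 2^K \<Longrightarrow> \<bar>\<Sum>k\<in>{s..<s+j}. \<xi> k x\<bar> \<le> pmax \<xi> s K x"
  unfolding pmax_def by (rule Max_ge) auto

lemma pmax_nonneg: "0 \<le> pmax \<xi> s K x"
  using pmax_ge[where j=0 and K=K and s=s and \<xi>=\<xi> and x=x] by simp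

lemma pmax_le:
  assumes "\<And>j. j \<le> 2^K \<Longrightarrow> \<bar>\<Sum>k\<in>{s..<s+j}. \<xi> k x\<bar> \<le> B"
  shows "pmax \<xi> s K x \<le> B"
  unfolding pmax_def using assms by (subst Max_le_iff) auto

lemma pmax_0: "pmax \<xi> s 0 x = \<bar>\<xi> s x\<bar>"
proof (rule antisym)
  show "pmax \<xi> s 0 x \<le> \<bar>\<xi> s x\<bar>"
  proof (rule pmax_le)
    fix j :: nat assume "j \<le> 2^0"
    then have "j = 0 \<or> j = 1" by auto
    then show "\<bar>\<Sum>k\<in>{s..<s+j}. \<xi> k x\<bar> \<le> \<bar>\<xi> s x\<bar>" by auto
  qed
  show "\<bar>\<xi> s x\<bar> \<le> pmax \<xi> s 0 x" using pmax_ge[where j=1 and K=0 and s=s and \<xi>=\<xi> and x=x] by simp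
qed

lemma pmax_Suc:
  "pmax \<xi> s (Suc K) x \<le> \<bar>\<Sum>k\<in>{s..<s+2^K}. \<xi> k x\<bar> + max (pmax \<xi> s K x) (pmax \<xi> (s+2^K) K x)"
proof (rule pmax_le)
  fix j :: nat assume j: "j \<le> 2 ^ Suc K"
  show "\<bar>\<Sum>k\<in>{s..<s+j}. \<xi> k x\<bar> \<le> \<bar>\<Sum>k\<in>{s..<s+2^K}. \<xi> k x\<bar> + max (pmax \<xi> s K x) (pmax \<xi> (s+2^K) K x)"
  proof (cases "j \<le> 2^K")
    case True
    then have "\<bar>\<Sum>k\<in>{s..<s+j}. \<xi> k x\<bar> \<le> pmax \<xi> s K x" by (rule pmax_ge)
    then show ?thesis by linarith
  next
    case False
    define j' where "j' = j - 2^K"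
    have j': "j = 2^K + j'" "j' \<le> 2^K" using False j unfolding j'_def by auto
    have "(\<Sum>k\<in>{s..<s+j}. \<xi> k x) = (\<Sum>k\<in>{s..<s+2^K}. \<xi> k x) + (\<Sum>k\<in>{s+2^K..<s+2^K+j'}. \<xi> k x)"
      unfolding j'(1) by (subst sum.atLeastLessThan_concat[symmetric]) (auto simp: add.assoc)
    also have "\<bar>\<dots>\<bar> \<le> \<bar>\<Sum>k\<in>{s..<s+2^K}. \<xi> k x\<bar> + \<bar>\<Sum>k\<in>{s+2^K..<s+2^K+j'}. \<xi> k x\<bar>"
      by (rule abs_triangle_ineq)
    also have "\<bar>\<Sum>k\<in>{s+2^K..<s+2^K+j'}. \<xi> k x\<bar> \<le> pmax \<xi> (s+2^K) K x"
      by (rule pmax_ge) (fact j')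
    finally show ?thesis by linarith
  qed
qed

lemma pmax_bound:
  assumes "\<And>k. \<bar>\<xi> k x\<bar> \<le> \<beta>"
  shows "pmax \<xi> s K x \<le> 2^K * \<beta>"
proof (rule pmax_le)
  fix j :: nat assume j: "j \<le> 2^K"
  have "\<bar>\<Sum>k\<in>{s..<s+j}. \<xi> k x\<bar> \<le> (\<Sum>k\<in>{s..<s+j}. \<bar>\<xi> k x\<bar>)" by (rule sum_abs)
  also have "\<dots> \<le> (\<Sum>k\<in>{s..<s+j}. \<beta>)" by (rule sum_mono) (rule assms)
  also have "\<dots> = real j * \<beta>" by simp
  also have "\<dots> \<le> 2^K * \<beta>"
  proof (rule mult_right_mono)
    show "real j \<le> 2^K" using j by (metis of_nat_le_iff of_nat_numeral of_nat_power)
    show "0 \<le> \<beta>" using assms[of 0] by linarith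
  qed
  finally show "\<bar>\<Sum>k\<in>{s..<s+j}. \<xi> k x\<bar> \<le> 2^K * \<beta>" .
qed

lemma pmax_measurable [measurable]:
  assumes [measurable]: "\<And>k. \<xi> k \<in> borel_measurable M"
  shows "pmax \<xi> s K \<in> borel_measurable M"
proof -
  have "pmax \<xi> s K = (\<lambda>x. MAX j\<in>{0..2^K}. \<bar>\<Sum>k\<in>{s..<s+j}. \<xi> k x\<bar>)"
    unfolding pmax_def by (rule ext) simp
  also have "\<dots> \<in> borel_measurable M"
    by (rule borel_measurable_Max) auto
  finally show ?thesis .
qed

lemma split_powr:
  fixes x y q d :: real
  assumes q: "q > 0" and d: "d > 0" and x: "x \<ge> 0" and y: "y \<ge> 0"
  shows "(x + y) powr q \<le> (1 + d) powr q * x powr q + (1 + 1/d) powr q * y powr q"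
proof (cases "y \<le> d * x")
  case True
  then have h: "x + y \<le> (1 + d) * x" by (simp add: algebra_simps)
  have "(x + y) powr q \<le> ((1 + d) * x) powr q" by (rule powr_mono2[OF _ _ h]) (use q x y d in auto)
  also have "\<dots> = (1 + d) powr q * x powr q" using d x by (simp add: powr_mult)
  finally show ?thesis
    by (smt (verit) powr_ge_zero mult_nonneg_nonneg)
next
  case False
  then have "x \<le> y / d" using d by (simp add: field_simps)
  then have h: "x + y \<le> (1 + 1/d) * y" using d by (simp add: algebra_simps)
  have "(x + y) powr q \<le> ((1 + 1/d) * y) powr q" by (rule powr_mono2[OF _ _ h]) (use q x y d in auto)
  also have "\<dots> = (1 + 1/d) powr q * y powr q" using d y by (simp add: powr_mult)
  finally show ?thesis
    by (smt (verit) powr_ge_zero mult_nonneg_nonneg)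
qed

lemma max_powr_le: "(a::real) \<ge> 0 \<Longrightarrow> b \<ge> 0 \<Longrightarrow> max a b powr q \<le> a powr q + b powr q"
  by (cases "a \<le> b") (auto simp: max_def)

lemma powr_le_one_plus:
  fixes z p q :: real assumes "z \<ge> 0" "0 < p" "p \<le> q"
  shows "z powr p \<le> 1 + z powr q"
proof (cases "z \<le> 1")
  case True
  then have "z powr p \<le> 1" using assms by (simp add: powr_le1)
  then show ?thesis by (smt (verit) powr_ge_zero)
next
  case False
  then have "z powr p \<le> z powr q" using assms by (intro powr_mono) auto
  then show ?thesis by simp
qed


lemma sq_powr: assumes b: "(b::real) \<ge> 0" shows "(b\<^sup>2) powr (q/2) = b powr q"
proof (cases "b = 0")
  case False
  have "b\<^sup>2 = b powr 2" using b False by (simp add: powr_realpow)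
  then have "(b\<^sup>2) powr (q/2) = (b powr 2) powr (q/2)" by simp
  also have "\<dots> = b powr (2 * (q/2))" by (rule powr_powr)
  finally show ?thesis by simp
qed simp

lemma (in prob_space) pmax_moment:
  fixes \<xi> :: "nat \<Rightarrow> 'a \<Rightarrow> real"
  assumes indep: "indep_vars (\<lambda>_. borel) \<xi> UNIV"
    and bnd: "\<And>k x. x \<in> space M \<Longrightarrow> \<bar>\<xi> k x\<bar> \<le> \<beta>"
    and E0: "\<And>k. expectation (\<xi> k) = 0"
    and \<beta>: "\<beta> > 0" and q: "q > 0" and d: "d > 0"
    and hD: "2 * (1+d) powr q < 2 powr (q/2)"
  defines "D \<equiv> max 1 ((1+1/d) powr q * (2 * exp (1/2) * q powr q) / (2 powr (q/2) - 2 * (1+d) powr q))"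
  shows "expectation (\<lambda>x. pmax \<xi> s K x powr q) \<le> D * (2^K * \<beta>\<^sup>2) powr (q/2)"
proof -
  have rv[measurable]: "\<And>k. \<xi> k \<in> borel_measurable M" using indep unfolding indep_vars_def by blast
  have D1: "1 \<le> D" unfolding D_def by simp
  have bnd': "\<bar>\<xi> k x\<bar> \<le> \<beta>" if "x \<in> space M" for k x using bnd[OF that] .
  have intP: "integrable M (\<lambda>x. pmax \<xi> s K x powr q)" for s K
  proof (rule integrable_bounded[where B="(2^K * \<beta>) powr q"])
    show "(\<lambda>x. pmax \<xi> s K x powr q) \<in> borel_measurable M" by measurable
    fix x assume x: "x \<in> space M"
    have "pmax \<xi> s K x powr q \<le> (2^K * \<beta>) powr q"
      by (rule powr_mono2) (use q pmax_nonneg pmax_bound[of \<xi> x \<beta>] bnd'[OF x] in auto)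
    then show "\<bar>pmax \<xi> s K x powr q\<bar> \<le> (2^K * \<beta>) powr q" by simp
  qed
  define c0 where "c0 = 2 * exp (1/2) * q powr q"
  define A where "A = (1+d) powr q"
  define B where "B = (1+1/d) powr q"
  have A: "A \<ge> 0" unfolding A_def by simp
  have B: "B \<ge> 0" unfolding B_def by simp
  have c0: "c0 \<ge> 0" unfolding c0_def by simp
  have keyD: "2 * A * D + B * c0 \<le> 2 powr (q/2) * D"
  proof -
    have pos: "2 powr (q/2) - 2 * A > 0" using hD unfolding A_def by simp
    have "B * c0 / (2 powr (q/2) - 2 * A) \<le> D" unfolding D_def A_def B_def c0_def by simp
    then have "B * c0 \<le> D * (2 powr (q/2) - 2 * A)" using pos by (simp add: divide_le_eq)
    then show ?thesis by (simp add: algebra_simps)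
  qed
  show ?thesis
  proof (induction K arbitrary: s)
    case 0
    have "expectation (\<lambda>x. pmax \<xi> s 0 x powr q) = expectation (\<lambda>x. \<bar>\<xi> s x\<bar> powr q)"
      by (simp add: pmax_0)
    also have "\<dots> \<le> expectation (\<lambda>x. \<beta> powr q)"
    proof (rule integral_mono)
      show "integrable M (\<lambda>x. \<bar>\<xi> s x\<bar> powr q)"
        using intP[of s 0] by (simp add: pmax_0)
      show "integrable M (\<lambda>x. \<beta> powr q)" by simp
      fix x assume x: "x \<in> space M"
      show "\<bar>\<xi> s x\<bar> powr q \<le> \<beta> powr q" by (rule powr_mono2) (use q bnd[OF x] in auto)
    qed
    also have "\<dots> = \<beta> powr q" by (simp add: prob_space)
    also have "\<dots> = (2^0 * \<beta>\<^sup>2) powr (q/2)" using sq_powr[of \<beta> q] \<beta> by simp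
    also have "\<dots> \<le> D * (2^0 * \<beta>\<^sup>2) powr (q/2)"
      using mult_right_mono[OF D1 powr_ge_zero] by simp
    finally show ?case .
  next
    case (Suc K)
    define u where "u = (2^K * \<beta>\<^sup>2) powr (q/2)"
    define blk where "blk x = \<bar>\<Sum>k\<in>{s..<s+2^K}. \<xi> k x\<bar>" for x
    have blkm[measurable]: "blk \<in> borel_measurable M" unfolding blk_def by measurable
    have intB: "integrable M (\<lambda>x. blk x powr q)"
    proof (rule integrable_bounded[where B="(2^K * \<beta>) powr q"])
      show "(\<lambda>x. blk x powr q) \<in> borel_measurable M" by measurable
      fix x assume x: "x \<in> space M"
      have "blk x \<le> pmax \<xi> s K x" unfolding blk_def by (rule pmax_ge) simp
      also have "\<dots> \<le> 2^K * \<beta>" by (rule pmax_bound) (rule bnd'[OF x])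
      finally have h: "blk x \<le> 2^K * \<beta>" .
      have "blk x powr q \<le> (2^K * \<beta>) powr q"
        by (rule powr_mono2[OF _ _ h]) (use q blk_def in auto)
      then show "\<bar>blk x powr q\<bar> \<le> (2^K * \<beta>) powr q" by simp
    qed
    have mb: "expectation (\<lambda>x. blk x powr q) \<le> c0 * u"
    proof -
      have "expectation (\<lambda>x. blk x powr q) \<le> 2 * exp (1/2) * q powr q * (real (card {s..<s+2^K}) * \<beta>\<^sup>2) powr (q/2)"
        unfolding blk_def by (rule moment_sum_bound[OF indep bnd E0 _ _ \<beta> q]) auto
      then show ?thesis unfolding c0_def u_def by simp
    qed
    have pw: "pmax \<xi> s (Suc K) x powr q
        \<le> A * (pmax \<xi> s K x powr q + pmax \<xi> (s+2^K) K x powr q) + B * blk x powr q" for x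
    proof -
      have "pmax \<xi> s (Suc K) x powr q \<le> (max (pmax \<xi> s K x) (pmax \<xi> (s+2^K) K x) + blk x) powr q"
        by (rule powr_mono2) (use q pmax_nonneg pmax_Suc[of \<xi> s K x] in \<open>auto simp: blk_def\<close>)
      also have "\<dots> \<le> A * max (pmax \<xi> s K x) (pmax \<xi> (s+2^K) K x) powr q + B * blk x powr q"
        unfolding A_def B_def by (rule split_powr[OF q d]) (auto simp: blk_def pmax_nonneg max_def)
      also have "max (pmax \<xi> s K x) (pmax \<xi> (s+2^K) K x) powr q \<le> pmax \<xi> s K x powr q + pmax \<xi> (s+2^K) K x powr q"
        by (rule max_powr_le) (simp_all add: pmax_nonneg)
      finally show ?thesis using A by (smt (verit) mult_left_mono)
    qed
    have "expectation (\<lambda>x. pmax \<xi> s (Suc K) x powr q)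
        \<le> expectation (\<lambda>x. A * (pmax \<xi> s K x powr q + pmax \<xi> (s+2^K) K x powr q) + B * blk x powr q)"
      by (rule integral_mono[OF intP _ pw]) (intro Bochner_Integration.integrable_add integrable_mult_right intP intB)
    also have "\<dots> = A * (expectation (\<lambda>x. pmax \<xi> s K x powr q) + expectation (\<lambda>x. pmax \<xi> (s+2^K) K x powr q))
        + B * expectation (\<lambda>x. blk x powr q)"
      using intP[of s K] intP[of "s+2^K" K] intB by simp
    also have "\<dots> \<le> A * (D * u + D * u) + B * (c0 * u)"
      using Suc.IH[of s] Suc.IH[of "s+2^K"] mb A B unfolding u_def
      by (intro add_mono mult_left_mono) auto
    also have "\<dots> = (2 * A * D + B * c0) * u" by (simp add: algebra_simps)
    also have "\<dots> \<le> (2 powr (q/2) * D) * u"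
      by (rule mult_right_mono[OF keyD]) (simp add: u_def)
    also have "(2 powr (q/2) * D) * u = D * (2^Suc K * \<beta>\<^sup>2) powr (q/2)"
      unfolding u_def by (simp add: powr_mult[symmetric] mult_ac)
    finally show ?case .
  qed
qed


definition chainD :: "real \<Rightarrow> real" where
  "chainD p = (let q = p + 1; d = 2 powr ((q - 2) / (4 * q)) - 1 in
     max 1 ((1+1/d) powr q * (2 * exp (1/2) * q powr q) / (2 powr (q/2) - 2 * (1+d) powr q)))"

definition Cmax :: "real \<Rightarrow> real" where
  "Cmax p = (1 + chainD p) * 2 powr (p/2)"

lemma chainD_ge1: "1 \<le> chainD p"
  unfolding chainD_def Let_def by simp

lemma Cmax_pos: "Cmax p > 0"
  unfolding Cmax_def using chainD_ge1[of p] by (simp add: add_pos_nonneg)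

lemma (in prob_space) max_partial_sum_moment:
  fixes \<xi> :: "nat \<Rightarrow> 'a \<Rightarrow> real"
  assumes indep: "indep_vars (\<lambda>_. borel) \<xi> UNIV"
    and bnd: "\<And>k x. x \<in> space M \<Longrightarrow> \<bar>\<xi> k x\<bar> \<le> \<beta>"
    and E0: "\<And>k. expectation (\<xi> k) = 0"
    and \<beta>: "\<beta> > 0" and p: "p \<ge> 2" and n: "n \<ge> 1"
  shows "integrable M (\<lambda>x. (Max ((\<lambda>i. \<bar>\<Sum>k\<in>{1..i}. \<xi> k x\<bar>) ` {0..n})) powr p)"
    and "expectation (\<lambda>x. (Max ((\<lambda>i. \<bar>\<Sum>k\<in>{1..i}. \<xi> k x\<bar>) ` {0..n})) powr p)
           \<le> Cmax p * (real n * \<beta>\<^sup>2) powr (p/2)"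
proof -
  have rv[measurable]: "\<And>k. \<xi> k \<in> borel_measurable M" using indep unfolding indep_vars_def by blast
  define Y where "Y x = Max ((\<lambda>i. \<bar>\<Sum>k\<in>{1..i}. \<xi> k x\<bar>) ` {0..n})" for x
  have Ym[measurable]: "Y \<in> borel_measurable M" unfolding Y_def by (rule borel_measurable_Max) auto
  obtain K' where K': "2^K' \<le> n" "n < 2^(K'+1)" using ex_power_ivl1[of 2 n] n by auto
  define K where "K = K' + 1"
  have K1: "n \<le> 2^K" using K' unfolding K_def by simp
  have K2: "real (2^K) \<le> 2 * real n" using K' unfolding K_def by (simp del: of_nat_power add: of_nat_power[symmetric])
  have Ypm: "Y x \<le> pmax \<xi> 1 K x" for x
    unfolding Y_def
  proof (subst Max_le_iff, simp, simp, safe)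
    fix i assume i: "i \<in> {0..n}"
    have "{1..i} = {1..<1+i}" by auto
    then show "\<bar>\<Sum>k\<in>{1..i}. \<xi> k x\<bar> \<le> pmax \<xi> 1 K x"
      using pmax_ge[where j=i and K=K and s=1 and \<xi>=\<xi> and x=x] i K1 by simp
  qed
  have Y0: "0 \<le> Y x" for x
  proof -
    have "\<bar>\<Sum>k\<in>{1..0::nat}. \<xi> k x\<bar> \<le> Y x" unfolding Y_def by (rule Max_ge) (auto intro!: image_eqI[where x=0])
    then show ?thesis by simp
  qed
  have Yb: "Y x \<le> real n * \<beta>" if x: "x \<in> space M" for x
    unfolding Y_def
  proof (subst Max_le_iff, simp, simp, safe)
    fix i assume i: "i \<in> {0..n}"
    have "\<bar>\<Sum>k\<in>{1..i}. \<xi> k x\<bar> \<le> (\<Sum>k\<in>{1..i}. \<bar>\<xi> k x\<bar>)" by (rule sum_abs)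
    also have "\<dots> \<le> (\<Sum>k\<in>{1..i}. \<beta>)" by (rule sum_mono) (rule bnd[OF x])
    also have "\<dots> = real i * \<beta>" by simp
    also have "\<dots> \<le> real n * \<beta>" using i \<beta> by (intro mult_right_mono) auto
    finally show "\<bar>\<Sum>k\<in>{1..i}. \<xi> k x\<bar> \<le> real n * \<beta>" .
  qed
  have pp: "p > 0" using p by simp
  show intY: "integrable M (\<lambda>x. (Max ((\<lambda>i. \<bar>\<Sum>k\<in>{1..i}. \<xi> k x\<bar>) ` {0..n})) powr p)"
    unfolding Y_def[symmetric]
  proof (rule integrable_bounded[where B="(real n * \<beta>) powr p"])
    show "(\<lambda>x. Y x powr p) \<in> borel_measurable M" by measurable
    fix x assume x: "x \<in> space M"
    have "Y x powr p \<le> (real n * \<beta>) powr p" by (rule powr_mono2) (use pp Y0 Yb[OF x] in auto)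
    then show "\<bar>Y x powr p\<bar> \<le> (real n * \<beta>) powr p" by simp
  qed
  define q where "q = p + 1"
  define d where "d = 2 powr ((q - 2) / (4 * q)) - 1"
  have q: "q > 2" "q > 0" "p \<le> q" using p unfolding q_def by auto
  have d: "d > 0" unfolding d_def using q by simp
  have dq: "(1 + d) powr q = 2 powr ((q - 2) / 4)"
    unfolding d_def using q by (simp add: powr_powr)
  have hD: "2 * (1+d) powr q < 2 powr (q/2)"
  proof -
    have "2 * (1+d) powr q = 2 powr (1 + (q - 2) / 4)" unfolding dq by (simp add: powr_add)
    also have "\<dots> < 2 powr (q/2)" using q by (simp add: field_simps)
    finally show ?thesis .
  qed
  have Deq: "chainD p = max 1 ((1+1/d) powr q * (2 * exp (1/2) * q powr q) / (2 powr (q/2) - 2 * (1+d) powr q))"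
    unfolding chainD_def Let_def q_def d_def ..
  define D where "D = chainD p"
  have mom: "expectation (\<lambda>x. pmax \<xi> 1 K x powr q) \<le> D * (2^K * \<beta>\<^sup>2) powr (q/2)"
    unfolding D_def Deq by (rule pmax_moment[OF indep bnd E0 \<beta> q(2) d hD])
  define \<sigma> where "\<sigma> = (2^K * \<beta>\<^sup>2) powr (1/2)"
  have \<sigma>: "\<sigma> > 0" unfolding \<sigma>_def using \<beta> by simp
  have \<sigma>q: "\<sigma> powr q = (2^K * \<beta>\<^sup>2) powr (q/2)" "\<sigma> powr p = (2^K * \<beta>\<^sup>2) powr (p/2)"
    unfolding \<sigma>_def by (simp_all add: powr_powr)
  have intPq: "integrable M (\<lambda>x. pmax \<xi> 1 K x powr q)"
  proof (rule integrable_bounded[where B="(2^K * \<beta>) powr q"])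
    show "(\<lambda>x. pmax \<xi> 1 K x powr q) \<in> borel_measurable M" by measurable
    fix x assume x: "x \<in> space M"
    have "pmax \<xi> 1 K x powr q \<le> (2^K * \<beta>) powr q"
      by (rule powr_mono2) (use q pmax_nonneg pmax_bound[of \<xi> x \<beta>] bnd[OF x] in auto)
    then show "\<bar>pmax \<xi> 1 K x powr q\<bar> \<le> (2^K * \<beta>) powr q" by simp
  qed
  have pw: "Y x powr p \<le> \<sigma> powr p + (\<sigma> powr p / \<sigma> powr q) * pmax \<xi> 1 K x powr q" for x
  proof -
    define z where "z = pmax \<xi> 1 K x / \<sigma>"
    have z: "z \<ge> 0" unfolding z_def using \<sigma> pmax_nonneg[of \<xi> 1 K x] by simp
    have pz: "pmax \<xi> 1 K x = \<sigma> * z" unfolding z_def using \<sigma> by simp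
    have "Y x powr p \<le> pmax \<xi> 1 K x powr p" by (rule powr_mono2) (use pp Y0 Ypm in auto)
    also have "\<dots> = \<sigma> powr p * z powr p" unfolding pz using \<sigma> z by (simp add: powr_mult)
    also have "\<dots> \<le> \<sigma> powr p * (1 + z powr q)"
      by (rule mult_left_mono[OF powr_le_one_plus[OF z pp]]) (use q in auto)
    also have "\<dots> = \<sigma> powr p + (\<sigma> powr p / \<sigma> powr q) * (\<sigma> powr q * z powr q)"
      using \<sigma> by (simp add: algebra_simps)
    also have "\<sigma> powr q * z powr q = pmax \<xi> 1 K x powr q" unfolding pz using \<sigma> z by (simp add: powr_mult)
    finally show ?thesis .
  qed
  have "expectation (\<lambda>x. Y x powr p) \<le> expectation (\<lambda>x. \<sigma> powr p + (\<sigma> powr p / \<sigma> powr q) * pmax \<xi> 1 K x powr q)"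
    by (rule integral_mono[OF _ _ pw]) (use intY[unfolded Y_def[symmetric]] intPq in auto)
  also have "\<dots> = \<sigma> powr p + (\<sigma> powr p / \<sigma> powr q) * expectation (\<lambda>x. pmax \<xi> 1 K x powr q)"
    using intPq by (simp add: prob_space)
  also have "\<dots> \<le> \<sigma> powr p + (\<sigma> powr p / \<sigma> powr q) * (D * \<sigma> powr q)"
    using mom unfolding \<sigma>q[symmetric] by (intro add_left_mono mult_left_mono) auto
  also have "\<dots> = (1 + D) * \<sigma> powr p" using \<sigma> by (simp add: field_simps)
  also have "\<sigma> powr p \<le> (2 * (real n * \<beta>\<^sup>2)) powr (p/2)"
    unfolding \<sigma>q using K2 \<beta> p by (intro powr_mono2) (auto intro!: mult_right_mono)
  also have "\<dots> = 2 powr (p/2) * (real n * \<beta>\<^sup>2) powr (p/2)" by (simp add: powr_mult)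
  finally show "expectation (\<lambda>x. (Max ((\<lambda>i. \<bar>\<Sum>k\<in>{1..i}. \<xi> k x\<bar>) ` {0..n})) powr p)
           \<le> Cmax p * (real n * \<beta>\<^sup>2) powr (p/2)"
    unfolding Y_def[symmetric] Cmax_def D_def
    using chainD_ge1[of p] by (simp add: mult_ac)
qed


locale odeset =
  fixes a b rho K L :: real and eta :: "'a::euclidean_space" and f :: "real \<Rightarrow> 'a \<Rightarrow> 'a" and z :: "real \<Rightarrow> 'a"
  assumes ab: "a < b" and rho: "0 < rho" "rho \<le> 1" and K: "0 < K" and L: "0 < L"
    and F: "F_class a b rho K L eta f" and za: "z a = eta"
    and zd: "\<forall>t\<in>{a..b}. (z has_vector_derivative f t (z t)) (at t within {a..b})"
begin

lemma eta: "norm eta \<le> K" using F unfolding F_class_def by blast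
lemma fcont: "continuous_on ({a..b} \<times> UNIV) (\<lambda>(t, x). f t x)" using F unfolding F_class_def by blast
lemma fgrow: "t \<in> {a..b} \<Longrightarrow> norm (f t x) \<le> K * (1 + norm x)" using F unfolding F_class_def by blast
lemma fhold: "t \<in> {a..b} \<Longrightarrow> s \<in> {a..b} \<Longrightarrow> norm (f t x - f s x) \<le> L * \<bar>t - s\<bar> powr rho"
  using F unfolding F_class_def by blast
lemma flip: "t \<in> {a..b} \<Longrightarrow> norm (f t x - f t y) \<le> L * norm (x - y)"
  using F unfolding F_class_def by blast

lemma zcont: "continuous_on {a..b} z"
  unfolding continuous_on_eq_continuous_within
proof
  fix t assume "t \<in> {a..b}"
  then show "continuous (at t within {a..b}) z" using zd by (auto intro: has_vector_derivative_continuous)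
qed

lemma zder_at: assumes x: "a < x" "x < b" shows "(z has_vector_derivative f x (z x)) (at x)"
proof -
  have "(z has_vector_derivative f x (z x)) (at x within {a..b})" using zd x by auto
  then show ?thesis by (simp add: at_within_Icc_at[OF x])
qed

lemma z_bound_aux:
  assumes t: "t \<in> {a..b}"
  shows "1 + norm (z t)^2 \<le> (1 + K^2) * exp (3 * K * (t - a))"
proof -
  define \<psi> where "\<psi> s = exp (- 3 * K * (s - a)) * (1 + z s \<bullet> z s)" for s
  have "\<psi> t \<le> \<psi> a"
  proof (rule DERIV_nonpos_imp_decreasing_open[where f=\<psi> and a=a and b=t])
    show "a \<le> t" using t by simp
    show "continuous_on {a..t} \<psi>" unfolding \<psi>_def
      by (intro continuous_intros continuous_on_subset[OF zcont]) (use t in auto)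
    fix x assume x: "a < x" "x < t"
    have xb: "x < b" using x t by simp
    have dz: "(z has_derivative (\<lambda>h. h *\<^sub>R f x (z x))) (at x)"
      using zder_at[OF x(1) xb] unfolding has_vector_derivative_def .
    define D where "D = - 3 * K * exp (- 3 * K * (x - a)) * (1 + z x \<bullet> z x)
        + exp (- 3 * K * (x - a)) * (2 * (z x \<bullet> f x (z x)))"
    have "(\<psi> has_real_derivative D) (at x)"
    proof -
      have i: "((\<lambda>s. z s \<bullet> z s) has_derivative (\<lambda>h. z x \<bullet> (h *\<^sub>R f x (z x)) + (h *\<^sub>R f x (z x)) \<bullet> z x)) (at x)"
        by (rule has_derivative_inner[OF dz dz])
      have i2: "((\<lambda>s. z s \<bullet> z s) has_real_derivative (2 * (z x \<bullet> f x (z x)))) (at x)"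
        unfolding has_field_derivative_def
        by (rule has_derivative_eq_rhs[OF i]) (auto simp: inner_commute algebra_simps fun_eq_iff)
      have l1: "((\<lambda>s. s - a) has_real_derivative (1 - 0)) (at x)"
        by (rule DERIV_diff[OF DERIV_ident DERIV_const])
      have l2: "((\<lambda>s. - 3 * K * (s - a)) has_real_derivative (- 3 * K * (1 - 0))) (at x)"
        by (rule DERIV_cmult[OF l1])
      have l3: "((\<lambda>s. exp (- 3 * K * (s - a))) has_real_derivative exp (- 3 * K * (x - a)) * (- 3 * K * (1 - 0))) (at x)"
        by (rule DERIV_fun_exp[OF l2])
      have l4: "((\<lambda>s. 1 + z s \<bullet> z s) has_real_derivative (0 + 2 * (z x \<bullet> f x (z x)))) (at x)"
        by (rule DERIV_add[OF DERIV_const i2])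
      have l5: "(\<psi> has_real_derivative (exp (- 3 * K * (x - a)) * (- 3 * K * (1 - 0)) * (1 + z x \<bullet> z x)
          + (0 + 2 * (z x \<bullet> f x (z x))) * exp (- 3 * K * (x - a)))) (at x)"
        unfolding \<psi>_def by (rule DERIV_mult[OF l3 l4])
      show ?thesis by (rule DERIV_cong[OF l5]) (simp add: D_def algebra_simps)
    qed
    moreover have "D \<le> 0"
    proof -
      have g: "norm (f x (z x)) \<le> K * (1 + norm (z x))" by (rule fgrow) (use x xb in auto)
      have "z x \<bullet> f x (z x) \<le> norm (z x) * norm (f x (z x))" by (rule norm_cauchy_schwarz)
      also have "\<dots> \<le> norm (z x) * (K * (1 + norm (z x)))" by (rule mult_left_mono[OF g]) simp
      finally have c1: "z x \<bullet> f x (z x) \<le> norm (z x) * (K * (1 + norm (z x)))" .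
      define n where "n = norm (z x)"
      have "0 \<le> (n - 1)^2" by simp
      then have h1: "2 * n + 2 * n^2 \<le> 3 + 3 * n^2" by (simp add: power2_eq_square algebra_simps)
      have "2 * (n * (K * (1 + n))) = K * (2 * n + 2 * n^2)" by (simp add: power2_eq_square algebra_simps)
      also have "\<dots> \<le> K * (3 + 3 * n^2)" by (rule mult_left_mono[OF h1]) (use K in simp)
      also have "\<dots> = 3 * K * (1 + z x \<bullet> z x)" by (simp add: n_def power2_norm_eq_inner algebra_simps)
      finally have c: "2 * (z x \<bullet> f x (z x)) \<le> 3 * K * (1 + z x \<bullet> z x)" using c1 unfolding n_def by linarith
      have "D = exp (- 3 * K * (x - a)) * (2 * (z x \<bullet> f x (z x)) - 3 * K * (1 + z x \<bullet> z x))"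
        unfolding D_def by (simp add: algebra_simps)
      also have "\<dots> \<le> 0" using c by (intro mult_nonneg_nonpos) auto
      finally show ?thesis .
    qed
    ultimately show "\<exists>y. (\<psi> has_real_derivative y) (at x) \<and> y \<le> 0" by blast
  qed
  then have "exp (- 3 * K * (t - a)) * (1 + norm (z t)^2) \<le> 1 + norm eta ^ 2"
    unfolding \<psi>_def by (simp add: za power2_norm_eq_inner)
  also have "\<dots> \<le> 1 + K^2" using eta by (simp add: power_mono)
  finally have "exp (- 3 * K * (t - a)) * (1 + norm (z t)^2) \<le> 1 + K^2" .
  then have "exp (- 3 * K * (t - a)) * (1 + norm (z t)^2) * exp (3 * K * (t - a)) \<le> (1 + K^2) * exp (3 * K * (t - a))"
    by (rule mult_right_mono) simp
  moreover have "exp (- 3 * K * (t - a)) * (1 + norm (z t)^2) * exp (3 * K * (t - a)) = 1 + norm (z t)^2"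
  proof -
    have "exp (- 3 * K * (t - a)) * exp (3 * K * (t - a)) = 1" by (simp add: exp_add[symmetric])
    then show ?thesis by (metis mult.commute mult.left_commute mult_1_right)
  qed
  ultimately show ?thesis by linarith
qed

end


definition "Zb a b K = sqrt ((1 + K^2) * exp (3*K*(b-a)))"
definition "Gb a b K = K * (1 + Zb a b K)"
definition "Hb a b K L = L * (1 + 3 * Gb a b K)"

lemma tri3: "norm ((x::'a::real_normed_vector) - z) \<le> norm (x - y) + norm (y - z)"
  using norm_triangle_ineq[of "x - y" "y - z"] by simp

context odeset begin

lemma Gb_nonneg: "0 \<le> Gb a b K" using K unfolding Gb_def Zb_def by simp
lemma Hb_pos: "0 < Hb a b K L" using L Gb_nonneg unfolding Hb_def by (simp add: add_pos_nonneg)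

lemma z_bound: assumes t: "t \<in> {a..b}" shows "norm (z t) \<le> Zb a b K"
proof -
  have "norm (z t)^2 \<le> (1 + K^2) * exp (3 * K * (t - a))" using z_bound_aux[OF t] by simp
  also have "\<dots> \<le> (1 + K^2) * exp (3 * K * (b - a))"
    using t K by (intro mult_left_mono) (auto intro!: mult_left_mono)
  finally show ?thesis unfolding Zb_def by (rule real_le_rsqrt)
qed

lemma g_bound: assumes t: "t \<in> {a..b}" shows "norm (f t (z t)) \<le> Gb a b K"
proof -
  have "norm (f t (z t)) \<le> K * (1 + norm (z t))" by (rule fgrow[OF t])
  also have "\<dots> \<le> K * (1 + Zb a b K)" using z_bound[OF t] K by (intro mult_left_mono) auto
  finally show ?thesis unfolding Gb_def .
qed

lemma zd_sub: "t \<in> S \<Longrightarrow> S \<subseteq> {a..b} \<Longrightarrow> (z has_vector_derivative f t (z t)) (at t within S)"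
  using zd by (auto intro: has_vector_derivative_within_subset)

lemma z_lip: assumes x: "x \<in> {a..b}" and y: "y \<in> {a..b}"
  shows "norm (z y - z x) \<le> 3 * Gb a b K * \<bar>y - x\<bar>"
proof -
  define S where "S = closed_segment x y"
  define G where "G = Gb a b K"
  have S: "S \<subseteq> {a..b}" unfolding S_def using x y by (auto simp: closed_segment_eq_real_ivl split: if_splits)
  have xS: "x \<in> S" unfolding S_def by simp
  have A: "norm (z y - z x - (y - x) *\<^sub>R f x (z x)) \<le> norm (y - x) * (2 * G)"
  proof (rule vector_differentiable_bound_linearization[where S=S])
    show "\<And>t. t \<in> S \<Longrightarrow> (z has_vector_derivative f t (z t)) (at t within S)" using zd_sub S by blast
    show "closed_segment x y \<subseteq> S" unfolding S_def by simp
    show "x \<in> S" by (fact xS)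
    fix t assume "t \<in> S"
    then have t: "t \<in> {a..b}" using S by blast
    have "norm (f t (z t) - f x (z x)) \<le> norm (f t (z t)) + norm (f x (z x))" by (rule norm_triangle_ineq4)
    also have "\<dots> \<le> G + G" using g_bound[OF t] g_bound[OF x] unfolding G_def by simp
    finally show "norm (f t (z t) - f x (z x)) \<le> 2 * G" by simp
  qed
  have B: "norm ((y - x) *\<^sub>R f x (z x)) \<le> \<bar>y - x\<bar> * G"
    using g_bound[OF x] unfolding G_def by (simp add: mult_left_mono)
  have C: "norm (z y - z x) \<le> norm (z y - z x - (y - x) *\<^sub>R f x (z x)) + norm ((y - x) *\<^sub>R f x (z x))"
    using norm_triangle_ineq[of "z y - z x - (y - x) *\<^sub>R f x (z x)" "(y - x) *\<^sub>R f x (z x)"] by simp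
  have "norm (y - x) * (2 * G) = 2 * (\<bar>y - x\<bar> * G)" by simp
  with A B C have "norm (z y - z x) \<le> 3 * (\<bar>y - x\<bar> * G)" by linarith
  then show ?thesis unfolding G_def by (simp add: mult_ac)
qed

lemma le_powr_rho: "0 \<le> u \<Longrightarrow> u \<le> 1 \<Longrightarrow> u \<le> u powr rho"
proof -
  assume u: "0 \<le> u" "u \<le> 1"
  have "u powr 1 \<le> u powr rho" by (rule powr_mono') (use rho u in auto)
  then show ?thesis using u by (cases "u = 0") auto
qed

lemma g_hold: assumes t: "t \<in> {a..b}" and c: "c \<in> {a..b}" and tc: "\<bar>t - c\<bar> \<le> 1"
  shows "norm (f t (z t) - f c (z c)) \<le> Hb a b K L * \<bar>t - c\<bar> powr rho"
proof -
  define G where "G = Gb a b K"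
  define u where "u = \<bar>t - c\<bar>"
  have G: "G \<ge> 0" unfolding G_def by (rule Gb_nonneg)
  have A: "norm (f t (z t) - f c (z c)) \<le> norm (f t (z t) - f c (z t)) + norm (f c (z t) - f c (z c))"
    by (rule tri3)
  have B: "norm (f t (z t) - f c (z t)) \<le> L * u powr rho" unfolding u_def by (rule fhold[OF t c])
  have C: "norm (f c (z t) - f c (z c)) \<le> L * norm (z t - z c)" by (rule flip[OF c])
  have D: "norm (z t - z c) \<le> 3 * G * u" using z_lip[OF c t] unfolding G_def u_def by simp
  have E: "u \<le> u powr rho" unfolding u_def by (rule le_powr_rho) (use tc in auto)
  have "L * norm (z t - z c) \<le> L * (3 * G * u)" using D L by (intro mult_left_mono) auto
  also have "\<dots> \<le> L * (3 * G * u powr rho)" using E L G by (intro mult_left_mono) auto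
  finally have C': "norm (f c (z t) - f c (z c)) \<le> L * (3 * G * u powr rho)" using C by linarith
  have "Hb a b K L * u powr rho = L * u powr rho + L * (3 * G * u powr rho)"
    unfolding Hb_def G_def by (simp add: algebra_simps)
  with A B C' show ?thesis unfolding u_def[symmetric] by linarith
qed

lemma loc: assumes xy: "x \<le> y" "y - x \<le> 1" and x: "x \<in> {a..b}" and y: "y \<in> {a..b}" and c: "c \<in> {x..y}"
  shows "norm (z y - z x - (y - x) *\<^sub>R f c (z c)) \<le> Hb a b K L * (y - x) powr rho * (y - x)"
proof -
  have S: "{x..y} \<subseteq> {a..b}" using x y by auto
  have "norm (z y - z x - (y - x) *\<^sub>R f c (z c)) \<le> norm (y - x) * (Hb a b K L * (y - x) powr rho)"
  proof (rule vector_differentiable_bound_linearization[where S="{x..y}"])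
    show "\<And>t. t \<in> {x..y} \<Longrightarrow> (z has_vector_derivative f t (z t)) (at t within {x..y})" using zd_sub S by blast
    show "closed_segment x y \<subseteq> {x..y}" using xy by (simp add: closed_segment_eq_real_ivl)
    show "c \<in> {x..y}" by (fact c)
    fix t assume t: "t \<in> {x..y}"
    have tc: "\<bar>t - c\<bar> \<le> y - x" using t c by auto
    have "norm (f t (z t) - f c (z c)) \<le> Hb a b K L * \<bar>t - c\<bar> powr rho"
      by (rule g_hold) (use t c S tc xy in auto)
    also have "\<dots> \<le> Hb a b K L * (y - x) powr rho"
      using Hb_pos rho tc by (intro mult_left_mono powr_mono2) auto
    finally show "norm (f t (z t) - f c (z c)) \<le> Hb a b K L * (y - x) powr rho" .
  qed
  then show ?thesis using xy by (simp add: mult_ac)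
qed

end

lemma geom_identity: "(\<beta>::real) * (\<Sum>k<j. (1+\<beta>)^k) = (1+\<beta>)^j - 1"
  by (induction j) (simp_all add: algebra_simps)

lemma dgron:
  fixes x :: "nat \<Rightarrow> real"
  assumes h: "\<And>j. j \<le> N \<Longrightarrow> x j \<le> \<alpha> + \<beta> * (\<Sum>k<j. x k)" and \<alpha>: "\<alpha> \<ge> 0" and \<beta>: "\<beta> \<ge> 0"
  shows "j \<le> N \<Longrightarrow> x j \<le> \<alpha> * (1+\<beta>)^j"
proof (induction j rule: less_induct)
  case (less j)
  have "x j \<le> \<alpha> + \<beta> * (\<Sum>k<j. x k)" using h less.prems by blast
  also have "\<beta> * (\<Sum>k<j. x k) \<le> \<beta> * (\<Sum>k<j. \<alpha> * (1+\<beta>)^k)"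
    using less.IH less.prems \<beta> by (intro mult_left_mono sum_mono) auto
  also have "\<beta> * (\<Sum>k<j. \<alpha> * (1+\<beta>)^k) = \<alpha> * (\<beta> * (\<Sum>k<j. (1+\<beta>)^k))"
    by (simp add: sum_distrib_left mult_ac)
  also have "\<dots> = \<alpha> * ((1+\<beta>)^j - 1)" by (simp add: geom_identity)
  finally show ?case by (simp add: algebra_simps)
qed

lemma one_plus_pow_le_exp: "(\<beta>::real) \<ge> 0 \<Longrightarrow> (1+\<beta>)^j \<le> exp (\<beta> * real j)"
proof -
  assume b: "\<beta> \<ge> 0"
  have "(1+\<beta>)^j \<le> (exp \<beta>)^j" by (rule power_mono) (use b exp_ge_add_one_self[of \<beta>] in auto)
  also have "\<dots> = exp (\<beta> * real j)" by (simp add: exp_of_nat_mult[symmetric] mult.commute)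
  finally show ?thesis .
qed

locale scheme = odeset +
  fixes n :: nat and h :: real
  assumes h_def: "h = (b - a) / real n" and n1: "1 \<le> n" and h1: "h < 1" and Lh: "L * h < 1"
begin

lemma h_pos: "0 < h" using h_def n1 ab by simp
lemma nh: "real n * h = b - a" using h_def n1 by simp

lemma tj: "j \<le> n \<Longrightarrow> a + real j * h \<in> {a..b}"
proof -
  assume j: "j \<le> n"
  have "real j * h \<le> real n * h" using j h_pos by (intro mult_right_mono) auto
  then show ?thesis using nh h_pos by auto
qed

lemma theta_in: assumes j: "j < n" and s: "s \<in> {0..1}" shows "a + real j * h + h * s \<in> {a..b}"
proof -
  have hs: "h * s \<le> h" using s h_pos by (simp add: mult_left_le)
  have hs0: "0 \<le> h * s" using s h_pos by simp
  have t: "a + real (Suc j) * h \<in> {a..b}" using j by (intro tj) simp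
  have e: "real (Suc j) * h = real j * h + h" by (simp add: algebra_simps)
  have jh: "0 \<le> real j * h" using h_pos by simp
  show ?thesis unfolding atLeastAtMost_iff using hs hs0 t e jh by (simp only: atLeastAtMost_iff) linarith
qed

lemma fp_exists_unique:
  assumes j: "j < n" and s: "s \<in> {0..1}"
  shows "\<exists>!w. w = v + h *\<^sub>R f (a + real j * h + h * s) ((1 - s) *\<^sub>R v + s *\<^sub>R w)"
proof -
  define \<theta> where "\<theta> = a + real j * h + h * s"
  have \<theta>: "\<theta> \<in> {a..b}" unfolding \<theta>_def by (rule theta_in[OF j s])
  define F where "F w = v + h *\<^sub>R f \<theta> ((1 - s) *\<^sub>R v + s *\<^sub>R w)" for w
  have "\<exists>!w. F w = w"
  proof (rule banach_fix_type[where c="L * h"])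
    show "0 \<le> L * h" using L h_pos by simp
    show "L * h < 1" by (fact Lh)
    show "\<forall>x y. dist (F x) (F y) \<le> L * h * dist x y"
    proof (intro allI)
      fix x y
      have "dist (F x) (F y) = h * norm (f \<theta> ((1 - s) *\<^sub>R v + s *\<^sub>R x) - f \<theta> ((1 - s) *\<^sub>R v + s *\<^sub>R y))"
        unfolding F_def dist_norm using h_pos by (simp add: scaleR_diff_right[symmetric])
      also have "\<dots> \<le> h * (L * norm (((1 - s) *\<^sub>R v + s *\<^sub>R x) - ((1 - s) *\<^sub>R v + s *\<^sub>R y)))"
        using h_pos by (intro mult_left_mono flip[OF \<theta>]) auto
      also have "norm (((1 - s) *\<^sub>R v + s *\<^sub>R x) - ((1 - s) *\<^sub>R v + s *\<^sub>R y)) = s * norm (x - y)"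
        using s by (simp add: scaleR_diff_right[symmetric])
      also have "h * (L * (s * norm (x - y))) \<le> L * h * dist x y"
      proof -
        have X: "s * norm (x - y) \<le> norm (x - y)" using s by (simp add: mult_left_le_one_le)
        have Y: "L * (s * norm (x - y)) \<le> L * norm (x - y)" by (rule mult_left_mono[OF X]) (use L in simp)
        have "h * (L * (s * norm (x - y))) \<le> h * (L * norm (x - y))" by (rule mult_left_mono[OF Y]) (use h_pos in simp)
        then show ?thesis by (simp add: dist_norm mult_ac)
      qed
      finally show "dist (F x) (F y) \<le> L * h * dist x y" .
    qed
  qed
  then show ?thesis unfolding F_def \<theta>_def by (metis (no_types, lifting))
qed

lemma rk2_step:
  assumes j: "j < n" and s: "s (Suc j) \<in> {0..1}"
  shows "rk2_implicit a h s eta f (Suc j) = rk2_implicit a h s eta f j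
     + h *\<^sub>R f (a + real j * h + h * s (Suc j))
        ((1 - s (Suc j)) *\<^sub>R rk2_implicit a h s eta f j + s (Suc j) *\<^sub>R rk2_implicit a h s eta f (Suc j))"
proof -
  let ?v = "rk2_implicit a h s eta f j" and ?\<sigma> = "s (Suc j)"
  have eu: "\<exists>!w. w = ?v + h *\<^sub>R f (a + real j * h + h * ?\<sigma>) ((1 - ?\<sigma>) *\<^sub>R ?v + ?\<sigma> *\<^sub>R w)"
    by (rule fp_exists_unique[OF j s])
  have "rk2_implicit a h s eta f (Suc j) = (THE w. w = ?v + h *\<^sub>R f (a + real j * h + h * ?\<sigma>) ((1 - ?\<sigma>) *\<^sub>R ?v + ?\<sigma> *\<^sub>R w))"
    by (simp add: Let_def)
  with theI'[OF eu] show ?thesis by simp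
qed


definition ee :: "nat \<Rightarrow> real \<Rightarrow> 'a" where
  "ee k \<sigma> = z (a + real k * h) - z (a + real (k - 1) * h)
      - h *\<^sub>R f (a + real (k - 1) * h + h * \<sigma>) (z (a + real (k - 1) * h + h * \<sigma>))"

lemma ee_bound: assumes k: "1 \<le> k" "k \<le> n" and \<sigma>: "\<sigma> \<in> {0..1}"
  shows "norm (ee k \<sigma>) \<le> Hb a b K L * h powr rho * h"
proof -
  have kk: "k - 1 < n" using k by simp
  have e: "a + real k * h - (a + real (k - 1) * h) = h" using k by (simp add: of_nat_diff algebra_simps)
  have "norm (z (a + real k * h) - z (a + real (k - 1) * h)
      - (a + real k * h - (a + real (k - 1) * h)) *\<^sub>R f (a + real (k - 1) * h + h * \<sigma>) (z (a + real (k - 1) * h + h * \<sigma>)))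
      \<le> Hb a b K L * (a + real k * h - (a + real (k - 1) * h)) powr rho * (a + real k * h - (a + real (k - 1) * h))"
  proof (rule loc)
    show "a + real (k - 1) * h \<le> a + real k * h" using e h_pos by simp
    show "a + real k * h - (a + real (k - 1) * h) \<le> 1" using e h1 by simp
    show "a + real (k - 1) * h \<in> {a..b}" using k by (intro tj) simp
    show "a + real k * h \<in> {a..b}" using k by (intro tj) simp
    have hs: "h * \<sigma> \<le> h" using \<sigma> h_pos by (simp add: mult_left_le)
    have hs0: "0 \<le> h * \<sigma>" using \<sigma> h_pos by simp
    show "a + real (k - 1) * h + h * \<sigma> \<in> {a + real (k - 1) * h..a + real k * h}"
      unfolding atLeastAtMost_iff using hs hs0 e by (intro conjI; linarith)
  qed
  then show ?thesis unfolding e ee_def .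
qed

lemma interp_bound: assumes j: "j < n" and \<sigma>: "\<sigma> \<in> {0..1}"
  shows "norm (z (a + real j * h + h * \<sigma>) - (1 - \<sigma>) *\<^sub>R z (a + real j * h) - \<sigma> *\<^sub>R z (a + real (Suc j) * h))
     \<le> 2 * (Hb a b K L * h powr rho * h)"
proof -
  define x where "x = a + real j * h"
  define y where "y = a + real (Suc j) * h"
  define \<theta> where "\<theta> = a + real j * h + h * \<sigma>"
  define v where "v = f \<theta> (z \<theta>)"
  define A where "A = z \<theta> - z x - (\<theta> - x) *\<^sub>R v"
  define B where "B = z y - z \<theta> - (y - \<theta>) *\<^sub>R v"
  have yx: "y = x + h" unfolding x_def y_def by (simp add: algebra_simps)
  have tx: "\<theta> - x = h * \<sigma>" unfolding \<theta>_def x_def by simp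
  have yt: "y - \<theta> = h * (1 - \<sigma>)" unfolding \<theta>_def yx x_def by (simp add: algebra_simps)
  have hs: "h * \<sigma> \<le> h" "0 \<le> h * \<sigma>" "h * (1 - \<sigma>) \<le> h" "0 \<le> h * (1 - \<sigma>)"
    using \<sigma> h_pos by (auto simp: mult_left_le)
  have xin: "x \<in> {a..b}" unfolding x_def using j by (intro tj) simp
  have yin: "y \<in> {a..b}" unfolding y_def using j by (intro tj) simp
  have tin: "\<theta> \<in> {a..b}" unfolding \<theta>_def by (rule theta_in[OF j \<sigma>])
  have H: "0 \<le> Hb a b K L" using Hb_pos by simp
  have pw: "u \<le> h \<Longrightarrow> 0 \<le> u \<Longrightarrow> Hb a b K L * u powr rho * u \<le> Hb a b K L * h powr rho * h" for u
  proof -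
    assume u: "u \<le> h" "0 \<le> u"
    have "u powr rho \<le> h powr rho" by (rule powr_mono2) (use rho u in auto)
    then have X: "Hb a b K L * u powr rho \<le> Hb a b K L * h powr rho" using H by (rule mult_left_mono)
    show ?thesis by (rule mult_mono[OF X u(1)]) (use u H in auto)
  qed
  have nA: "norm A \<le> Hb a b K L * h powr rho * h"
  proof -
    have "norm A \<le> Hb a b K L * (\<theta> - x) powr rho * (\<theta> - x)"
      unfolding A_def v_def by (rule loc) (use tx hs h1 xin tin in auto)
    also have "\<dots> \<le> Hb a b K L * h powr rho * h" unfolding tx by (rule pw) (use hs in auto)
    finally show ?thesis .
  qed
  have nB: "norm B \<le> Hb a b K L * h powr rho * h"
  proof -
    have "norm B \<le> Hb a b K L * (y - \<theta>) powr rho * (y - \<theta>)"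
      unfolding B_def v_def by (rule loc) (use yt hs h1 yin tin in auto)
    also have "\<dots> \<le> Hb a b K L * h powr rho * h" unfolding yt by (rule pw) (use hs in auto)
    finally show ?thesis .
  qed
  have ident: "z \<theta> - (1 - \<sigma>) *\<^sub>R z x - \<sigma> *\<^sub>R z y = (1 - \<sigma>) *\<^sub>R A - \<sigma> *\<^sub>R B"
  proof -
    have "(1 - \<sigma>) *\<^sub>R A - \<sigma> *\<^sub>R B = z \<theta> - (1 - \<sigma>) *\<^sub>R z x - \<sigma> *\<^sub>R z y
        - ((1 - \<sigma>) * (\<theta> - x) - \<sigma> * (y - \<theta>)) *\<^sub>R v"
      unfolding A_def B_def by (simp add: algebra_simps)
    also have "(1 - \<sigma>) * (\<theta> - x) - \<sigma> * (y - \<theta>) = 0" unfolding tx yt by (simp add: algebra_simps)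
    finally show ?thesis by simp
  qed
  have "norm ((1 - \<sigma>) *\<^sub>R A - \<sigma> *\<^sub>R B) \<le> norm ((1 - \<sigma>) *\<^sub>R A) + norm (\<sigma> *\<^sub>R B)" by (rule norm_triangle_ineq4)
  also have "norm ((1 - \<sigma>) *\<^sub>R A) \<le> norm A" using \<sigma> by (simp add: mult_left_le_one_le)
  also have "norm (\<sigma> *\<^sub>R B) \<le> norm B" using \<sigma> by (simp add: mult_left_le_one_le)
  finally have "norm ((1 - \<sigma>) *\<^sub>R A - \<sigma> *\<^sub>R B) \<le> norm A + norm B" by simp
  then show ?thesis using nA nB unfolding ident[symmetric] x_def y_def \<theta>_def by simp
qed


definition dd :: "(nat \<Rightarrow> real) \<Rightarrow> nat \<Rightarrow> 'a" where
  "dd s k = f (a + real (k - 1) * h + h * s k) (z (a + real (k - 1) * h + h * s k))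
     - f (a + real (k - 1) * h + h * s k)
         ((1 - s k) *\<^sub>R rk2_implicit a h s eta f (k - 1) + s k *\<^sub>R rk2_implicit a h s eta f k)"

lemma err_identity:
  assumes s: "\<And>i. s i \<in> {0..1}"
  shows "j \<le> n \<Longrightarrow> z (a + real j * h) - rk2_implicit a h s eta f j
     = (\<Sum>k\<in>{1..j}. ee k (s k)) + (\<Sum>k\<in>{1..j}. h *\<^sub>R dd s k)"
proof (induction j)
  case 0
  then show ?case by (simp add: za)
next
  case (Suc j)
  then have j: "j < n" by simp
  define V where "V = rk2_implicit a h s eta f j"
  define W where "W = rk2_implicit a h s eta f (Suc j)"
  define \<theta> where "\<theta> = a + real j * h + h * s (Suc j)"
  define F where "F = f \<theta> ((1 - s (Suc j)) *\<^sub>R V + s (Suc j) *\<^sub>R W)"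
  have step: "W = V + h *\<^sub>R F"
    unfolding W_def V_def F_def \<theta>_def by (rule rk2_step[OF j s])
  have IH: "z (a + real j * h) - V = (\<Sum>k\<in>{1..j}. ee k (s k)) + (\<Sum>k\<in>{1..j}. h *\<^sub>R dd s k)"
    unfolding V_def using Suc by simp
  have eeS: "ee (Suc j) (s (Suc j)) = z (a + real (Suc j) * h) - z (a + real j * h) - h *\<^sub>R f \<theta> (z \<theta>)"
    unfolding ee_def \<theta>_def by simp
  have ddS: "dd s (Suc j) = f \<theta> (z \<theta>) - F"
    unfolding dd_def F_def \<theta>_def V_def W_def by simp
  have "z (a + real (Suc j) * h) - W = z (a + real (Suc j) * h) - (V + h *\<^sub>R F)"
    using step by (rule arg_cong)
  also have "\<dots> = (z (a + real j * h) - V) + ee (Suc j) (s (Suc j)) + h *\<^sub>R dd s (Suc j)"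
    unfolding eeS ddS by (simp add: algebra_simps)
  finally show ?case unfolding W_def IH by simp
qed


lemma dd_bound:
  assumes s: "\<And>i. s i \<in> {0..1}" and k: "1 \<le> k" "k \<le> n"
  shows "norm (dd s k) \<le> L * (2 * (Hb a b K L * h powr rho * h)
     + norm (z (a + real (k - 1) * h) - rk2_implicit a h s eta f (k - 1))
     + norm (z (a + real k * h) - rk2_implicit a h s eta f k))"
proof -
  obtain j where kj: "k = Suc j" using k by (cases k) auto
  have j: "j < n" using k kj by simp
  define \<sigma> where "\<sigma> = s (Suc j)"
  have \<sigma>: "\<sigma> \<in> {0..1}" unfolding \<sigma>_def by (rule s)
  define \<theta> where "\<theta> = a + real j * h + h * \<sigma>"
  define V where "V = rk2_implicit a h s eta f j"
  define W where "W = rk2_implicit a h s eta f (Suc j)"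
  define x where "x = a + real j * h"
  define y where "y = a + real (Suc j) * h"
  define I where "I = z \<theta> - (1 - \<sigma>) *\<^sub>R z x - \<sigma> *\<^sub>R z y"
  have nI: "norm I \<le> 2 * (Hb a b K L * h powr rho * h)"
    unfolding I_def \<theta>_def x_def y_def by (rule interp_bound[OF j \<sigma>])
  have tin: "\<theta> \<in> {a..b}" unfolding \<theta>_def by (rule theta_in[OF j \<sigma>])
  have "norm (dd s k) = norm (f \<theta> (z \<theta>) - f \<theta> ((1 - \<sigma>) *\<^sub>R V + \<sigma> *\<^sub>R W))"
    unfolding dd_def kj \<theta>_def \<sigma>_def V_def W_def by simp
  also have "\<dots> \<le> L * norm (z \<theta> - ((1 - \<sigma>) *\<^sub>R V + \<sigma> *\<^sub>R W))" by (rule flip[OF tin])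
  also have "z \<theta> - ((1 - \<sigma>) *\<^sub>R V + \<sigma> *\<^sub>R W) = I + (1 - \<sigma>) *\<^sub>R (z x - V) + \<sigma> *\<^sub>R (z y - W)"
    unfolding I_def by (simp add: algebra_simps)
  also have "norm (I + (1 - \<sigma>) *\<^sub>R (z x - V) + \<sigma> *\<^sub>R (z y - W)) \<le> norm I + norm (z x - V) + norm (z y - W)"
  proof -
    have "norm (I + (1 - \<sigma>) *\<^sub>R (z x - V) + \<sigma> *\<^sub>R (z y - W))
        \<le> norm I + norm ((1 - \<sigma>) *\<^sub>R (z x - V)) + norm (\<sigma> *\<^sub>R (z y - W))"
      by (rule order_trans[OF norm_triangle_ineq add_right_mono[OF norm_triangle_ineq]])
    also have "norm ((1 - \<sigma>) *\<^sub>R (z x - V)) \<le> norm (z x - V)" using \<sigma> by (simp add: mult_left_le_one_le)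
    also have "norm (\<sigma> *\<^sub>R (z y - W)) \<le> norm (z y - W)" using \<sigma> by (simp add: mult_left_le_one_le)
    finally show ?thesis by simp
  qed
  finally have "norm (dd s k) \<le> L * (norm I + norm (z x - V) + norm (z y - W))" using L by (simp add: mult_left_mono)
  also have "\<dots> \<le> L * (2 * (Hb a b K L * h powr rho * h) + norm (z x - V) + norm (z y - W))"
    using nI L by (intro mult_left_mono) auto
  finally show ?thesis unfolding x_def y_def V_def W_def kj by simp
qed

lemma sumA: "(\<Sum>k\<in>{1..j::nat}. F (k - 1)) = (\<Sum>k<j. (F k :: real))"
  by (induction j) (simp_all add: sum.cl_ivl_Suc)

lemma sumB: "(\<Sum>k\<in>{1..j::nat}. F k) + F 0 = (\<Sum>k<j. (F k :: real)) + F j"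
  by (induction j) (simp_all add: sum.cl_ivl_Suc)

lemma err_bound:
  assumes s: "\<And>i. s i \<in> {0..1}" and \<delta>: "0 < \<delta>" "\<delta> \<le> 1 - L * h" and j: "j \<le> n"
  shows "norm (z (a + real j * h) - rk2_implicit a h s eta f j)
     \<le> exp (2 * L * (b - a) / \<delta>) / \<delta> *
        (Max ((\<lambda>i. norm (\<Sum>k\<in>{1..i}. ee k (s k))) ` {0..n}) + 2 * L * (b - a) * (Hb a b K L * h powr rho * h))"
proof -
  define R where "R i = norm (z (a + real i * h) - rk2_implicit a h s eta f i)" for i
  define Mx where "Mx = Max ((\<lambda>i. norm (\<Sum>k\<in>{1..i}. ee k (s k))) ` {0..n})"
  define c where "c = Hb a b K L * h powr rho * h"
  define A where "A = Mx + 2 * L * (b - a) * c"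
  have c0: "0 \<le> c" unfolding c_def using Hb_pos h_pos by simp
  have R0: "0 \<le> R i" for i unfolding R_def by simp
  have Mx_ge: "norm (\<Sum>k\<in>{1..i}. ee k (s k)) \<le> Mx" if "i \<le> n" for i
    unfolding Mx_def by (rule Max_ge) (use that in auto)
  have Mx0: "0 \<le> Mx" using Mx_ge[of 0] by simp
  have A0: "0 \<le> A" unfolding A_def using Mx0 c0 L ab by simp
  have hL: "0 \<le> h * L" using h_pos L by simp
  have main: "R j \<le> A / \<delta> + (2 * h * L / \<delta>) * (\<Sum>k<j. R k)" if j: "j \<le> n" for j
  proof -
    have "R j = norm ((\<Sum>k\<in>{1..j}. ee k (s k)) + (\<Sum>k\<in>{1..j}. h *\<^sub>R dd s k))"
      unfolding R_def using err_identity[OF s j] by simp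
    also have "\<dots> \<le> norm (\<Sum>k\<in>{1..j}. ee k (s k)) + norm (\<Sum>k\<in>{1..j}. h *\<^sub>R dd s k)"
      by (rule norm_triangle_ineq)
    also have "norm (\<Sum>k\<in>{1..j}. h *\<^sub>R dd s k) \<le> (\<Sum>k\<in>{1..j}. norm (h *\<^sub>R dd s k))"
      by (rule norm_sum)
    also have "\<dots> \<le> (\<Sum>k\<in>{1..j}. h * (L * (2 * c + R (k - 1) + R k)))"
    proof (rule sum_mono)
      fix k assume k: "k \<in> {1..j}"
      have "norm (dd s k) \<le> L * (2 * c + R (k - 1) + R k)"
        unfolding c_def R_def by (rule dd_bound[OF s]) (use k j in auto)
      then show "norm (h *\<^sub>R dd s k) \<le> h * (L * (2 * c + R (k - 1) + R k))"
        using h_pos by (simp add: mult_left_mono)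
    qed
    also have "(\<Sum>k\<in>{1..j}. h * (L * (2 * c + R (k - 1) + R k)))
        = h * L * (2 * c * real j + (\<Sum>k\<in>{1..j}. R (k - 1)) + (\<Sum>k\<in>{1..j}. R k))"
      by (simp add: sum.distrib sum_distrib_left algebra_simps)
    also have "(\<Sum>k\<in>{1..j}. R (k - 1)) = (\<Sum>k<j. R k)" by (rule sumA)
    also have "(\<Sum>k\<in>{1..j}. R k) \<le> (\<Sum>k<j. R k) + R j" using sumB[of R j] R0[of 0] by linarith
    finally have X: "R j \<le> norm (\<Sum>k\<in>{1..j}. ee k (s k))
        + h * L * (2 * c * real j + (\<Sum>k<j. R k) + ((\<Sum>k<j. R k) + R j))"
      using hL by (smt (verit) mult_left_mono)
    have jh: "h * real j \<le> b - a" using nh j h_pos by (metis mult.commute mult_right_mono of_nat_le_iff less_imp_le)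
    have Y: "h * L * (2 * c * real j) \<le> 2 * L * (b - a) * c"
    proof -
      have "h * L * (2 * c * real j) = (h * real j) * (2 * L * c)" by (simp add: algebra_simps)
      also have "\<dots> \<le> (b - a) * (2 * L * c)" by (rule mult_right_mono[OF jh]) (use L c0 in simp)
      finally show ?thesis by (simp add: algebra_simps)
    qed
    have "R j \<le> Mx + 2 * L * (b - a) * c + 2 * h * L * (\<Sum>k<j. R k) + h * L * R j"
      using X Y Mx_ge[OF j] by (simp add: algebra_simps)
    then have "(1 - L * h) * R j \<le> A + 2 * h * L * (\<Sum>k<j. R k)"
      unfolding A_def by (simp add: algebra_simps)
    moreover have "\<delta> * R j \<le> (1 - L * h) * R j" by (rule mult_right_mono[OF \<delta>(2) R0])
    ultimately have "\<delta> * R j \<le> A + 2 * h * L * (\<Sum>k<j. R k)" by linarith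
    then show ?thesis using \<delta>(1) by (simp add: field_simps)
  qed
  have P1: "R j \<le> A / \<delta> * (1 + 2 * h * L / \<delta>)^j"
  proof (rule dgron[OF main _ _ j])
    show "0 \<le> A / \<delta>" using A0 \<delta> by simp
    have "0 \<le> 2 * h * L" using h_pos L by simp
    then show "0 \<le> 2 * h * L / \<delta>" using \<delta> by simp
  qed
  have P2: "(1 + 2 * h * L / \<delta>)^j \<le> exp (2 * h * L / \<delta> * real j)"
    by (rule one_plus_pow_le_exp) (use h_pos L \<delta> in simp)
  have P3: "exp (2 * h * L / \<delta> * real j) \<le> exp (2 * L * (b - a) / \<delta>)"
  proof -
    have "h * real j \<le> b - a" using nh j h_pos by (metis mult.commute mult_right_mono of_nat_le_iff less_imp_le)
    then have "2 * L * (h * real j) \<le> 2 * L * (b - a)" using L by simp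
    then have "2 * L * (h * real j) / \<delta> \<le> 2 * L * (b - a) / \<delta>" using \<delta> by (simp add: divide_right_mono)
    then show ?thesis by (simp add: mult_ac)
  qed
  have "A / \<delta> * (1 + 2 * h * L / \<delta>)^j \<le> A / \<delta> * exp (2 * L * (b - a) / \<delta>)"
    by (rule mult_left_mono[OF order_trans[OF P2 P3]]) (use A0 \<delta> in simp)
  with P1 have "R j \<le> A / \<delta> * exp (2 * L * (b - a) / \<delta>)" by linarith
  then show ?thesis unfolding R_def A_def Mx_def c_def by (simp add: mult_ac)
qed

end


lemma uniform01_integral:
  fixes \<psi> :: "real \<Rightarrow> real"
  assumes m: "\<psi> \<in> borel_measurable borel" and c: "continuous_on {0..1} \<psi>"
  shows "integral\<^sup>L (uniform_measure lborel {0..1}) \<psi> = integral {0..1} \<psi>"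
proof -
  have u: "uniform_measure lborel {0..1::real} = density lborel (\<lambda>x. ennreal (indicator {0..1} x))"
    unfolding uniform_measure_def by (simp add: ennreal_indicator divide_ennreal_def)
  have "integral\<^sup>L (uniform_measure lborel {0..1}) \<psi> = (LINT x|lborel. indicator {0..1} x *\<^sub>R \<psi> x)"
    unfolding u by (rule integral_density) (use m in auto)
  also have "\<dots> = set_lebesgue_integral lborel {0..1} \<psi>" unfolding set_lebesgue_integral_def ..
  also have "\<dots> = integral {0..1} \<psi>"
    by (rule set_borel_integral_eq_integral(2)[OF borel_integrable_atLeastAtMost'[OF c]])
  finally show ?thesis .
qed

context odeset begin

lemma cont_fz:
  assumes "continuous_on S \<phi>" and "\<phi> ` S \<subseteq> {a..b}"
  shows "continuous_on S (\<lambda>\<sigma>. f (\<phi> \<sigma>) (z (\<phi> \<sigma>)))"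
proof -
  have zc: "continuous_on S (\<lambda>\<sigma>. z (\<phi> \<sigma>))" by (rule continuous_on_compose2[OF zcont assms])
  have p: "continuous_on S (\<lambda>\<sigma>. (\<phi> \<sigma>, z (\<phi> \<sigma>)))" by (intro continuous_on_Pair assms(1) zc)
  have "continuous_on S (\<lambda>\<sigma>. (\<lambda>(t, x). f t x) (\<phi> \<sigma>, z (\<phi> \<sigma>)))"
    by (rule continuous_on_compose2[OF fcont p]) (use assms(2) in auto)
  then show ?thesis by simp
qed

end

context scheme begin

definition cl01 :: "real \<Rightarrow> real" where "cl01 \<sigma> = max 0 (min 1 \<sigma>)"

lemma cl01_in: "cl01 \<sigma> \<in> {0..1}" unfolding cl01_def by auto
lemma cl01_id: "\<sigma> \<in> {0..1} \<Longrightarrow> cl01 \<sigma> = \<sigma>" unfolding cl01_def by auto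
lemma cl01_cont: "continuous_on S cl01" unfolding cl01_def by (intro continuous_intros)

lemma ee_cont: assumes k: "1 \<le> k" "k \<le> n"
  shows "continuous_on UNIV (\<lambda>\<sigma>. ee k (cl01 \<sigma>))"
proof -
  define \<phi> where "\<phi> \<sigma> = a + real (k - 1) * h + h * cl01 \<sigma>" for \<sigma>
  have pc: "continuous_on UNIV \<phi>" unfolding \<phi>_def by (intro continuous_intros cl01_cont)
  have pi: "\<phi> ` UNIV \<subseteq> {a..b}"
  proof
    fix y assume "y \<in> \<phi> ` UNIV"
    then obtain \<sigma> where y: "y = \<phi> \<sigma>" by auto
    have "\<phi> \<sigma> \<in> {a..b}" unfolding \<phi>_def by (rule theta_in) (use k cl01_in in auto)
    then show "y \<in> {a..b}" using y by simp
  qed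
  have "continuous_on UNIV (\<lambda>\<sigma>. f (\<phi> \<sigma>) (z (\<phi> \<sigma>)))" by (rule cont_fz[OF pc pi])
  then show ?thesis unfolding ee_def \<phi>_def[symmetric] by (intro continuous_intros)
qed

lemma ee_meas: assumes k: "1 \<le> k" "k \<le> n"
  shows "(\<lambda>\<sigma>. ee k (cl01 \<sigma>) \<bullet> u) \<in> borel_measurable borel"
proof (rule borel_measurable_continuous_onI)
  show "continuous_on UNIV (\<lambda>\<sigma>. ee k (cl01 \<sigma>) \<bullet> u)"
    by (intro continuous_intros ee_cont[OF k])
qed

lemma ee_integral: assumes k: "1 \<le> k" "k \<le> n"
  shows "integral {0..1} (\<lambda>\<sigma>. ee k \<sigma> \<bullet> u) = 0"
proof -
  define x where "x = a + real (k - 1) * h"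
  have xk: "x + h = a + real k * h" unfolding x_def using k by (simp add: of_nat_diff algebra_simps)
  have S: "(\<lambda>\<sigma>. x + h * \<sigma>) ` {0..1} \<subseteq> {a..b}"
  proof
    fix y assume "y \<in> (\<lambda>\<sigma>. x + h * \<sigma>) ` {0..1}"
    then obtain \<sigma> where y: "y = x + h * \<sigma>" and \<sigma>: "\<sigma> \<in> {0..1}" by blast
    have "x + h * \<sigma> \<in> {a..b}" unfolding x_def by (rule theta_in) (use k \<sigma> in auto)
    then show "y \<in> {a..b}" using y by simp
  qed
  have der: "((\<lambda>\<sigma>. z (x + h * \<sigma>)) has_vector_derivative h *\<^sub>R f (x + h * \<sigma>) (z (x + h * \<sigma>))) (at \<sigma> within {0..1})"
    if \<sigma>: "\<sigma> \<in> {0..1}" for \<sigma>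
  proof -
    have d1: "((\<lambda>\<sigma>. x + h * \<sigma>) has_real_derivative (0 + h * 1)) (at \<sigma> within {0..1})"
      by (intro DERIV_add DERIV_const DERIV_cmult DERIV_ident)
    then have d1': "((\<lambda>\<sigma>. x + h * \<sigma>) has_vector_derivative h) (at \<sigma> within {0..1})"
      by (simp add: has_real_derivative_iff_has_vector_derivative)
    have d2: "(z has_vector_derivative f (x + h * \<sigma>) (z (x + h * \<sigma>))) (at (x + h * \<sigma>) within (\<lambda>\<sigma>. x + h * \<sigma>) ` {0..1})"
      by (rule zd_sub) (use \<sigma> S in auto)
    from vector_diff_chain_within[OF d1' d2] show ?thesis by (simp add: o_def)
  qed
  have ftc: "((\<lambda>\<sigma>. h *\<^sub>R f (x + h * \<sigma>) (z (x + h * \<sigma>))) has_integral (z (x + h * 1) - z (x + h * 0))) {0..1}"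
    by (rule fundamental_theorem_of_calculus) (use der in auto)
  have c: "((\<lambda>\<sigma>. z (a + real k * h) - z x) has_integral (z (a + real k * h) - z x)) {0..1::real}"
    using has_integral_const[of "z (a + real k * h) - z x" "0::real" 1] by simp
  have "((\<lambda>\<sigma>. (z (a + real k * h) - z x) - h *\<^sub>R f (x + h * \<sigma>) (z (x + h * \<sigma>))) has_integral
      ((z (a + real k * h) - z x) - (z (x + h * 1) - z (x + h * 0)))) {0..1}"
    by (rule has_integral_diff[OF c ftc])
  then have "((\<lambda>\<sigma>. ee k \<sigma>) has_integral 0) {0..1}"
    unfolding ee_def x_def[symmetric] using xk by simp
  from has_integral_linear[OF this bounded_linear_inner_left[of u]]
  have "((\<lambda>\<sigma>. ee k \<sigma> \<bullet> u) has_integral 0) {0..1}" by (simp add: o_def)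
  then show ?thesis by (rule integral_unique)
qed

lemma ee_uniform_mean: assumes k: "1 \<le> k" "k \<le> n"
  shows "integral\<^sup>L (uniform_measure lborel {0..1}) (\<lambda>\<sigma>. ee k (cl01 \<sigma>) \<bullet> u) = 0"
proof -
  have "integral\<^sup>L (uniform_measure lborel {0..1}) (\<lambda>\<sigma>. ee k (cl01 \<sigma>) \<bullet> u) = integral {0..1} (\<lambda>\<sigma>. ee k (cl01 \<sigma>) \<bullet> u)"
  proof (rule uniform01_integral[OF ee_meas[OF k]])
    show "continuous_on {0..1} (\<lambda>\<sigma>. ee k (cl01 \<sigma>) \<bullet> u)"
      by (intro continuous_intros continuous_on_subset[OF ee_cont[OF k]]) auto
  qed
  also have "\<dots> = integral {0..1} (\<lambda>\<sigma>. ee k \<sigma> \<bullet> u)"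
    by (rule integral_cong) (simp add: cl01_id)
  also have "\<dots> = 0" by (rule ee_integral[OF k])
  finally show ?thesis .
qed

end

context odeset begin

definition fe :: "real \<times> 'a \<Rightarrow> 'a" where "fe p = f (max a (min b (fst p))) (snd p)"

lemma fe_cont: "continuous_on UNIV fe"
proof -
  have p: "continuous_on UNIV (\<lambda>p::real \<times> 'a. (max a (min b (fst p)), snd p))"
    by (intro continuous_intros)
  have "continuous_on UNIV (\<lambda>p::real \<times> 'a. (\<lambda>(t, x). f t x) (max a (min b (fst p)), snd p))"
    by (rule continuous_on_compose2[OF fcont p]) (use ab in auto)
  then show ?thesis unfolding fe_def by simp
qed

lemma fe_meas: "fe \<in> borel \<Otimes>\<^sub>M borel \<rightarrow>\<^sub>M borel"
  unfolding borel_prod by (rule borel_measurable_continuous_onI[OF fe_cont])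

lemma f_meas_comp:
  assumes A: "A \<in> borel_measurable M" and X: "X \<in> borel_measurable M"
    and Ain: "\<And>\<omega>. \<omega> \<in> space M \<Longrightarrow> A \<omega> \<in> {a..b}"
  shows "(\<lambda>\<omega>. f (A \<omega>) (X \<omega>)) \<in> borel_measurable M"
proof -
  have m1: "(\<lambda>\<omega>. fe (A \<omega>, X \<omega>)) \<in> borel_measurable M"
    by (rule measurable_compose[OF measurable_Pair[OF A X] fe_meas])
  have eq: "fe (A \<omega>, X \<omega>) = f (A \<omega>) (X \<omega>)" if w: "\<omega> \<in> space M" for \<omega>
  proof -
    have "A \<omega> \<in> {a..b}" by (rule Ain[OF w])
    then have "max a (min b (A \<omega>)) = A \<omega>" by auto
    then show ?thesis unfolding fe_def by simp
  qed
  have "(\<lambda>\<omega>. fe (A \<omega>, X \<omega>)) \<in> borel_measurable M \<longleftrightarrow> (\<lambda>\<omega>. f (A \<omega>) (X \<omega>)) \<in> borel_measurable M"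
    by (rule measurable_cong) (rule eq)
  with m1 show ?thesis by blast
qed

end

context scheme begin

lemma picard_conv:
  fixes v :: "'a"
  assumes j: "j < n" and \<sigma>: "\<sigma> \<in> {0..1}"
  defines "F \<equiv> (\<lambda>w. v + h *\<^sub>R f (a + real j * h + h * \<sigma>) ((1 - \<sigma>) *\<^sub>R v + \<sigma> *\<^sub>R w))"
  shows "(\<lambda>m. (F ^^ m) v) \<longlonglongrightarrow> (THE w. w = F w)"
proof -
  define ws where "ws = (THE w. w = F w)"
  have eu: "\<exists>!w. w = F w" unfolding F_def by (rule fp_exists_unique[OF j \<sigma>])
  have fixp: "ws = F ws" unfolding ws_def by (rule theI'[OF eu])
  define \<theta> where "\<theta> = a + real j * h + h * \<sigma>"
  have \<theta>: "\<theta> \<in> {a..b}" unfolding \<theta>_def by (rule theta_in[OF j \<sigma>])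
  have contr: "norm (F x - F y) \<le> (L * h) * norm (x - y)" for x y
  proof -
    have "norm (F x - F y) = h * norm (f \<theta> ((1 - \<sigma>) *\<^sub>R v + \<sigma> *\<^sub>R x) - f \<theta> ((1 - \<sigma>) *\<^sub>R v + \<sigma> *\<^sub>R y))"
      unfolding F_def \<theta>_def using h_pos by (simp add: scaleR_diff_right[symmetric])
    also have "\<dots> \<le> h * (L * norm (((1 - \<sigma>) *\<^sub>R v + \<sigma> *\<^sub>R x) - ((1 - \<sigma>) *\<^sub>R v + \<sigma> *\<^sub>R y)))"
      using h_pos by (intro mult_left_mono flip[OF \<theta>]) auto
    also have "norm (((1 - \<sigma>) *\<^sub>R v + \<sigma> *\<^sub>R x) - ((1 - \<sigma>) *\<^sub>R v + \<sigma> *\<^sub>R y)) = \<sigma> * norm (x - y)"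
      using \<sigma> by (simp add: scaleR_diff_right[symmetric])
    also have "h * (L * (\<sigma> * norm (x - y))) \<le> L * h * norm (x - y)"
    proof -
      have X: "\<sigma> * norm (x - y) \<le> norm (x - y)" using \<sigma> by (simp add: mult_left_le_one_le)
      have Y: "L * (\<sigma> * norm (x - y)) \<le> L * norm (x - y)" by (rule mult_left_mono[OF X]) (use L in simp)
      have "h * (L * (\<sigma> * norm (x - y))) \<le> h * (L * norm (x - y))" by (rule mult_left_mono[OF Y]) (use h_pos in simp)
      then show ?thesis by (simp add: mult_ac)
    qed
    finally show ?thesis .
  qed
  have bound: "norm ((F ^^ m) v - ws) \<le> (L * h)^m * norm (v - ws)" for m
  proof (induction m)
    case 0 then show ?case by simp
  next
    case (Suc m)
    have "norm ((F ^^ Suc m) v - ws) = norm (F ((F ^^ m) v) - F ws)" using fixp by (metis funpow.simps(2) o_apply)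
    also have "\<dots> \<le> (L * h) * norm ((F ^^ m) v - ws)" by (rule contr)
    also have "\<dots> \<le> (L * h) * ((L * h)^m * norm (v - ws))"
      by (rule mult_left_mono[OF Suc.IH]) (use L h_pos in simp)
    finally show ?case by (simp add: mult_ac)
  qed
  have "(\<lambda>m. (F ^^ m) v - ws) \<longlonglongrightarrow> 0"
  proof (rule Lim_null_comparison)
    show "\<forall>\<^sub>F m in sequentially. norm ((F ^^ m) v - ws) \<le> (L * h)^m * norm (v - ws)"
      using bound by simp
    have "(\<lambda>m. (L * h)^m) \<longlonglongrightarrow> 0" by (rule LIMSEQ_power_zero) (use L h_pos Lh in simp)
    then show "(\<lambda>m. (L * h)^m * norm (v - ws)) \<longlonglongrightarrow> 0" by (rule tendsto_mult_left_zero)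
  qed
  then show ?thesis unfolding ws_def[symmetric] by (rule LIM_zero_cancel)
qed

lemma rk2_meas:
  fixes M :: "'w measure" and T :: "nat \<Rightarrow> 'w \<Rightarrow> real"
  assumes Tm: "\<And>i. T i \<in> borel_measurable M" and T01: "\<And>i \<omega>. T i \<omega> \<in> {0..1}"
  shows "j \<le> n \<Longrightarrow> (\<lambda>\<omega>. rk2_implicit a h (\<lambda>i. T i \<omega>) eta f j) \<in> borel_measurable M"
proof (induction j)
  case 0 then show ?case by simp
next
  case (Suc j)
  then have j: "j < n" by simp
  define V where "V \<omega> = rk2_implicit a h (\<lambda>i. T i \<omega>) eta f j" for \<omega>
  have Vm: "V \<in> borel_measurable M" unfolding V_def using Suc by simp
  define F where "F \<omega> = (\<lambda>w. V \<omega> + h *\<^sub>R f (a + real j * h + h * T (Suc j) \<omega>) ((1 - T (Suc j) \<omega>) *\<^sub>R V \<omega> + T (Suc j) \<omega> *\<^sub>R w))" for \<omega>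
  have it: "(\<lambda>\<omega>. (F \<omega> ^^ m) (V \<omega>)) \<in> borel_measurable M" for m
  proof (induction m)
    case 0 then show ?case using Vm by simp
  next
    case (Suc m)
    have e: "(\<lambda>\<omega>. (F \<omega> ^^ Suc m) (V \<omega>)) = (\<lambda>\<omega>. V \<omega> + h *\<^sub>R f (a + real j * h + h * T (Suc j) \<omega>)
        ((1 - T (Suc j) \<omega>) *\<^sub>R V \<omega> + T (Suc j) \<omega> *\<^sub>R (F \<omega> ^^ m) (V \<omega>)))"
      unfolding F_def by simp
    have A: "(\<lambda>\<omega>. a + real j * h + h * T (Suc j) \<omega>) \<in> borel_measurable M" using Tm by measurable
    have X: "(\<lambda>\<omega>. (1 - T (Suc j) \<omega>) *\<^sub>R V \<omega> + T (Suc j) \<omega> *\<^sub>R (F \<omega> ^^ m) (V \<omega>)) \<in> borel_measurable M"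
      using Tm Vm Suc.IH by measurable
    have "(\<lambda>\<omega>. f (a + real j * h + h * T (Suc j) \<omega>) ((1 - T (Suc j) \<omega>) *\<^sub>R V \<omega> + T (Suc j) \<omega> *\<^sub>R (F \<omega> ^^ m) (V \<omega>)))
        \<in> borel_measurable M"
      by (rule f_meas_comp[OF A X]) (rule theta_in[OF j T01])
    then show ?case unfolding e using Vm by measurable
  qed
  have lim: "(\<lambda>m. (F \<omega> ^^ m) (V \<omega>)) \<longlonglongrightarrow> rk2_implicit a h (\<lambda>i. T i \<omega>) eta f (Suc j)" for \<omega>
  proof -
    have "(\<lambda>m. (F \<omega> ^^ m) (V \<omega>)) \<longlonglongrightarrow> (THE w. w = F \<omega> w)"
      unfolding F_def by (rule picard_conv[OF j T01])
    moreover have "rk2_implicit a h (\<lambda>i. T i \<omega>) eta f (Suc j) = (THE w. w = F \<omega> w)"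
      unfolding F_def V_def by (simp add: Let_def)
    ultimately show ?thesis by simp
  qed
  show ?case by (rule borel_measurable_LIMSEQ_metric[OF it lim])
qed

end


lemma sum_powr_bound:
  fixes y :: "'b \<Rightarrow> real"
  assumes B: "finite B" and y: "\<And>u. u \<in> B \<Longrightarrow> 0 \<le> y u" and c: "0 \<le> c" and p: "0 < p"
  shows "((\<Sum>u\<in>B. y u) + c) powr p \<le> (real (card B) + 1) powr p * ((\<Sum>u\<in>B. y u powr p) + c powr p)"
proof -
  define m where "m = Max (insert c (y ` B))"
  have fin: "finite (insert c (y ` B))" using B by simp
  have ym: "y u \<le> m" if "u \<in> B" for u unfolding m_def using fin that by (intro Max_ge) auto
  have cm: "c \<le> m" unfolding m_def using fin by (intro Max_ge) auto
  have m0: "0 \<le> m" using c cm by linarith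
  have "(\<Sum>u\<in>B. y u) \<le> (\<Sum>u\<in>B. m)" by (rule sum_mono) (rule ym)
  then have S: "(\<Sum>u\<in>B. y u) + c \<le> (real (card B) + 1) * m" using cm by (simp add: algebra_simps)
  have S0: "0 \<le> (\<Sum>u\<in>B. y u) + c" using y c by (simp add: sum_nonneg)
  have "((\<Sum>u\<in>B. y u) + c) powr p \<le> ((real (card B) + 1) * m) powr p"
    by (rule powr_mono2[OF _ S0 S]) (use p in simp)
  also have "\<dots> = (real (card B) + 1) powr p * m powr p" using m0 by (simp add: powr_mult)
  also have "m powr p \<le> (\<Sum>u\<in>B. y u powr p) + c powr p"
  proof -
    have "m \<in> insert c (y ` B)" unfolding m_def using fin by (intro Max_in) auto
    then consider "m = c" | u where "u \<in> B" "m = y u" by auto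
    then show ?thesis
    proof cases
      case 1
      have "0 \<le> (\<Sum>u\<in>B. y u powr p)" by (intro sum_nonneg) simp
      then show ?thesis using 1 by simp
    next
      case 2
      have "y u powr p \<le> (\<Sum>u\<in>B. y u powr p)" by (rule member_le_sum) (use 2 B in auto)
      then show ?thesis using 2 by (smt (verit) powr_ge_zero)
    qed
  qed
  then have "(real (card B) + 1) powr p * m powr p \<le> (real (card B) + 1) powr p * ((\<Sum>u\<in>B. y u powr p) + c powr p)"
    by (rule mult_left_mono) simp
  finally show ?thesis .
qed

context scheme begin

lemma cl01_meas [measurable]: "cl01 \<in> borel_measurable borel"
  unfolding cl01_def by measurable

lemma main_bound:
  fixes M :: "'w measure" and tau :: "nat \<Rightarrow> 'w \<Rightarrow> real" and p \<delta> :: real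
  assumes PS: "prob_space M" and ind: "prob_space.indep_vars M (\<lambda>_. borel) tau UNIV"
    and dis: "\<And>j. distr M borel (tau j) = uniform_measure lborel {0..1}" and p: "2 \<le> p"
    and \<delta>: "0 < \<delta>" "\<delta> \<le> 1 - L * h"
  defines "X' \<equiv> \<lambda>\<omega>. Max ((\<lambda>j. norm (z (a + real j * h) - rk2_implicit a h (\<lambda>i. cl01 (tau i \<omega>)) eta f j) powr p) ` {0..n})"
  shows "integrable M X'"
    and "prob_space.expectation M X' \<le> (exp (2 * L * (b - a) / \<delta>) / \<delta> * (real DIM('a) + 1)) powr p *
          (real DIM('a) * Cmax p * ((b - a) * (Hb a b K L)\<^sup>2) powr (p/2) + (2 * L * (b - a) * Hb a b K L) powr p)
          * h powr (p * (rho + 1/2))"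
proof -
  interpret prob_space M by (rule PS)
  have taum[measurable]: "\<And>i. tau i \<in> borel_measurable M" using ind unfolding indep_vars_def by blast
  define T where "T i \<omega> = cl01 (tau i \<omega>)" for i \<omega>
  have Tm: "\<And>i. T i \<in> borel_measurable M" unfolding T_def by measurable
  have T01: "\<And>i \<omega>. T i \<omega> \<in> {0..1}" unfolding T_def by (rule cl01_in)
  define \<beta> where "\<beta> = Hb a b K L * h powr rho * h"
  have \<beta>: "0 < \<beta>" unfolding \<beta>_def using Hb_pos h_pos by simp
  define \<phi> where "\<phi> u k \<sigma> = (if 1 \<le> k \<and> k \<le> n then ee k (cl01 \<sigma>) \<bullet> u else 0)" for u :: 'a and k \<sigma>
  define \<xi> where "\<xi> u k \<omega> = \<phi> u k (tau k \<omega>)" for u k \<omega>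
  have \<phi>m: "\<phi> u k \<in> borel_measurable borel" for u k
  proof (cases "1 \<le> k \<and> k \<le> n")
    case True
    then show ?thesis unfolding \<phi>_def using ee_meas[of k u] by simp
  next
    case False
    then have "\<phi> u k = (\<lambda>\<sigma>. 0)" unfolding \<phi>_def by (intro ext) auto
    then show ?thesis by simp
  qed
  have ind\<xi>: "indep_vars (\<lambda>_. borel) (\<xi> u) UNIV" for u
    unfolding \<xi>_def by (rule indep_vars_compose2[OF ind \<phi>m])
  have b\<xi>: "\<bar>\<xi> u k \<omega>\<bar> \<le> \<beta>" if u: "u \<in> Basis" for u k \<omega>
  proof (cases "1 \<le> k \<and> k \<le> n")
    case True
    have "\<bar>ee k (cl01 (tau k \<omega>)) \<bullet> u\<bar> \<le> norm (ee k (cl01 (tau k \<omega>)))" by (rule Basis_le_norm[OF u])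
    also have "\<dots> \<le> \<beta>" unfolding \<beta>_def by (rule ee_bound) (use True cl01_in in auto)
    finally show ?thesis unfolding \<xi>_def \<phi>_def using True by simp
  next
    case False
    then show ?thesis unfolding \<xi>_def \<phi>_def using \<beta> by auto
  qed
  have E\<xi>: "expectation (\<xi> u k) = 0" for u k
  proof -
    have "expectation (\<xi> u k) = integral\<^sup>L (distr M borel (tau k)) (\<phi> u k)"
      unfolding \<xi>_def by (rule integral_distr[symmetric]) (use \<phi>m in auto)
    also have "\<dots> = integral\<^sup>L (uniform_measure lborel {0..1}) (\<phi> u k)" by (simp add: dis)
    also have "\<dots> = 0"
    proof (cases "1 \<le> k \<and> k \<le> n")
      case True
      then have "\<phi> u k = (\<lambda>\<sigma>. ee k (cl01 \<sigma>) \<bullet> u)" unfolding \<phi>_def by (simp add: fun_eq_iff)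
      then show ?thesis using ee_uniform_mean[of k u] True by simp
    next
      case False
      then have "\<phi> u k = (\<lambda>\<sigma>. 0)" unfolding \<phi>_def by (intro ext) auto
      then show ?thesis by simp
    qed
    finally show ?thesis .
  qed
  define Y where "Y u \<omega> = Max ((\<lambda>i. \<bar>\<Sum>k\<in>{1..i}. \<xi> u k \<omega>\<bar>) ` {0..n})" for u \<omega>
  have intY: "integrable M (\<lambda>\<omega>. Y u \<omega> powr p)" if u: "u \<in> Basis" for u
    unfolding Y_def by (rule max_partial_sum_moment(1)[OF ind\<xi> b\<xi>[OF u] E\<xi> \<beta> p n1])
  have EY: "expectation (\<lambda>\<omega>. Y u \<omega> powr p) \<le> Cmax p * (real n * \<beta>\<^sup>2) powr (p/2)" if u: "u \<in> Basis" for u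
    unfolding Y_def by (rule max_partial_sum_moment(2)[OF ind\<xi> b\<xi>[OF u] E\<xi> \<beta> p n1])
  have Y0: "0 \<le> Y u \<omega>" for u \<omega>
  proof -
    have "\<bar>\<Sum>k\<in>{1..0::nat}. \<xi> u k \<omega>\<bar> \<le> Y u \<omega>" unfolding Y_def by (rule Max_ge) (auto intro!: image_eqI[where x=0])
    then show ?thesis by simp
  qed
  define \<Gamma> where "\<Gamma> = exp (2 * L * (b - a) / \<delta>) / \<delta>"
  have \<Gamma>: "0 < \<Gamma>" unfolding \<Gamma>_def using \<delta> by simp
  define c2 where "c2 = 2 * L * (b - a)"
  have c2: "0 \<le> c2" unfolding c2_def using L ab by simp
  define N where "N = real DIM('a) + 1"
  define G where "G \<omega> = (\<Gamma> * N) powr p * ((\<Sum>u\<in>Basis. Y u \<omega> powr p) + (c2 * \<beta>) powr p)" for \<omega>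
  have path: "X' \<omega> \<le> G \<omega>" for \<omega>
  proof -
    define Mx where "Mx = Max ((\<lambda>i. norm (\<Sum>k\<in>{1..i}. ee k (T k \<omega>))) ` {0..n})"
    have MxY: "Mx \<le> (\<Sum>u\<in>Basis. Y u \<omega>)"
      unfolding Mx_def
    proof (subst Max_le_iff, simp, simp, safe)
      fix i assume i: "i \<in> {0..n}"
      have "norm (\<Sum>k\<in>{1..i}. ee k (T k \<omega>)) \<le> (\<Sum>u\<in>Basis. \<bar>(\<Sum>k\<in>{1..i}. ee k (T k \<omega>)) \<bullet> u\<bar>)"
        by (rule norm_le_l1)
      also have "\<dots> = (\<Sum>u\<in>Basis. \<bar>\<Sum>k\<in>{1..i}. \<xi> u k \<omega>\<bar>)"
      proof (rule sum.cong[OF refl])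
        fix u :: 'a assume "u \<in> Basis"
        have "(\<Sum>k\<in>{1..i}. ee k (T k \<omega>)) \<bullet> u = (\<Sum>k\<in>{1..i}. ee k (T k \<omega>) \<bullet> u)" by (rule inner_sum_left)
        also have "\<dots> = (\<Sum>k\<in>{1..i}. \<xi> u k \<omega>)"
          by (rule sum.cong[OF refl]) (use i in \<open>auto simp: \<xi>_def \<phi>_def T_def\<close>)
        finally show "\<bar>(\<Sum>k\<in>{1..i}. ee k (T k \<omega>)) \<bullet> u\<bar> = \<bar>\<Sum>k\<in>{1..i}. \<xi> u k \<omega>\<bar>" by simp
      qed
      also have "\<dots> \<le> (\<Sum>u\<in>Basis. Y u \<omega>)"
        by (rule sum_mono) (unfold Y_def, rule Max_ge, use i in auto)
      finally show "norm (\<Sum>k\<in>{1..i}. ee k (T k \<omega>)) \<le> (\<Sum>u\<in>Basis. Y u \<omega>)" .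
    qed
    have Sb: "norm (z (a + real j * h) - rk2_implicit a h (\<lambda>i. T i \<omega>) eta f j) \<le> \<Gamma> * ((\<Sum>u\<in>Basis. Y u \<omega>) + c2 * \<beta>)"
      if j: "j \<le> n" for j
    proof -
      have "norm (z (a + real j * h) - rk2_implicit a h (\<lambda>i. T i \<omega>) eta f j) \<le> \<Gamma> * (Mx + c2 * \<beta>)"
        unfolding \<Gamma>_def Mx_def c2_def \<beta>_def by (rule err_bound[OF T01 \<delta> j])
      also have "\<dots> \<le> \<Gamma> * ((\<Sum>u\<in>Basis. Y u \<omega>) + c2 * \<beta>)"
        using MxY \<Gamma> by (intro mult_left_mono) auto
      finally show ?thesis .
    qed
    have S0: "0 \<le> (\<Sum>u\<in>Basis. Y u \<omega>) + c2 * \<beta>" using Y0 c2 \<beta> by (simp add: sum_nonneg)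
    have "X' \<omega> \<le> (\<Gamma> * ((\<Sum>u\<in>Basis. Y u \<omega>) + c2 * \<beta>)) powr p"
      unfolding X'_def
    proof (subst Max_le_iff, simp, simp, safe)
      fix j assume j: "j \<in> {0..n}"
      show "norm (z (a + real j * h) - rk2_implicit a h (\<lambda>i. cl01 (tau i \<omega>)) eta f j) powr p
          \<le> (\<Gamma> * ((\<Sum>u\<in>Basis. Y u \<omega>) + c2 * \<beta>)) powr p"
        by (rule powr_mono2) (use p Sb[of j] j in \<open>auto simp: T_def\<close>)
    qed
    also have "\<dots> = \<Gamma> powr p * ((\<Sum>u\<in>Basis. Y u \<omega>) + c2 * \<beta>) powr p"
      using \<Gamma> S0 by (simp add: powr_mult)
    also have "((\<Sum>u\<in>Basis. Y u \<omega>) + c2 * \<beta>) powr p \<le> N powr p * ((\<Sum>u\<in>Basis. Y u \<omega> powr p) + (c2 * \<beta>) powr p)"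
      unfolding N_def by (rule sum_powr_bound) (use Y0 c2 \<beta> p in auto)
    finally have "X' \<omega> \<le> \<Gamma> powr p * (N powr p * ((\<Sum>u\<in>Basis. Y u \<omega> powr p) + (c2 * \<beta>) powr p))"
      by (simp add: mult_left_mono)
    also have "\<dots> = G \<omega>" unfolding G_def using \<Gamma> by (simp add: powr_mult N_def)
    finally show ?thesis .
  qed
  have X'm: "X' \<in> borel_measurable M"
  proof -
    have "(\<lambda>\<omega>. MAX j\<in>{0..n}. norm (z (a + real j * h) - rk2_implicit a h (\<lambda>i. T i \<omega>) eta f j) powr p) \<in> borel_measurable M"
    proof (rule borel_measurable_Max)
      fix j assume "j \<in> {0..n}"
      then have "(\<lambda>\<omega>. rk2_implicit a h (\<lambda>i. T i \<omega>) eta f j) \<in> borel_measurable M"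
        by (intro rk2_meas[OF Tm T01]) auto
      then show "(\<lambda>\<omega>. norm (z (a + real j * h) - rk2_implicit a h (\<lambda>i. T i \<omega>) eta f j) powr p) \<in> borel_measurable M"
        by measurable
    qed simp
    then show ?thesis unfolding X'_def T_def .
  qed
  have intS: "integrable M (\<lambda>x. \<Sum>u\<in>Basis. Y u x powr p)" by (rule Bochner_Integration.integrable_sum[where f="\<lambda>u x. Y u x powr p"]) (rule intY)
  have intG: "integrable M G"
    unfolding G_def by (intro integrable_mult_right Bochner_Integration.integrable_add intS) auto
  have X'0: "0 \<le> X' \<omega>" for \<omega>
  proof -
    have "norm (z (a + real 0 * h) - rk2_implicit a h (\<lambda>i. cl01 (tau i \<omega>)) eta f 0) powr p \<le> X' \<omega>"
      unfolding X'_def by (rule Max_ge) (auto intro!: image_eqI[where x=0])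
    then show ?thesis by (smt (verit) powr_ge_zero)
  qed
  show intX': "integrable M X'"
  proof (rule Bochner_Integration.integrable_bound[OF intG X'm])
    show "AE x in M. norm (X' x) \<le> norm (G x)"
    proof (rule AE_I2)
      fix x assume "x \<in> space M"
      have "X' x \<le> G x" by (rule path)
      then show "norm (X' x) \<le> norm (G x)" using X'0[of x] by simp
    qed
  qed
  have cb: "(c2 * \<beta>) powr p \<le> (2 * L * (b - a) * Hb a b K L) powr p * h powr (p * (rho + 1/2))"
  proof -
    have "c2 * \<beta> = (2 * L * (b - a) * Hb a b K L) * h powr (rho + 1)"
      unfolding c2_def \<beta>_def using h_pos by (simp add: powr_add algebra_simps)
    then have "(c2 * \<beta>) powr p = ((2 * L * (b - a) * Hb a b K L) * h powr (rho + 1)) powr p" by simp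
    also have "\<dots> = (2 * L * (b - a) * Hb a b K L) powr p * (h powr (rho + 1)) powr p" by (rule powr_mult)
    also have "(h powr (rho + 1)) powr p = h powr (p * (rho + 1))" by (simp add: powr_powr mult.commute)
    finally have "(c2 * \<beta>) powr p = (2 * L * (b - a) * Hb a b K L) powr p * h powr (p * (rho + 1))" .
    also have "h powr (p * (rho + 1)) \<le> h powr (p * (rho + 1/2))"
      by (rule powr_mono') (use h_pos h1 p rho in auto)
    finally show ?thesis by (simp add: mult_left_mono)
  qed
  have "expectation X' \<le> expectation G" by (rule integral_mono[OF intX' intG path])
  also have "expectation G = (\<Gamma> * N) powr p * ((\<Sum>u\<in>Basis. expectation (\<lambda>\<omega>. Y u \<omega> powr p)) + (c2 * \<beta>) powr p)"
  proof -
    show ?thesis unfolding G_def using intY intS by (simp add: integral_sum prob_space)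
  qed
  also have "\<dots> \<le> (\<Gamma> * N) powr p * ((\<Sum>u\<in>(Basis::'a set). Cmax p * (real n * \<beta>\<^sup>2) powr (p/2)) + (c2 * \<beta>) powr p)"
    by (intro mult_left_mono add_right_mono sum_mono EY) auto
  also have "(\<Sum>u\<in>(Basis::'a set). Cmax p * (real n * \<beta>\<^sup>2) powr (p/2)) = real DIM('a) * Cmax p * (real n * \<beta>\<^sup>2) powr (p/2)"
    by simp
  also have "real n * \<beta>\<^sup>2 = ((b - a) * (Hb a b K L)\<^sup>2) * h powr (2 * rho + 1)"
  proof -
    have "(h powr rho)\<^sup>2 = h powr (2 * rho)" using h_pos by (simp add: powr_realpow[symmetric] powr_powr power2_eq_square powr_add[symmetric])
    then have "real n * \<beta>\<^sup>2 = (real n * h) * (Hb a b K L)\<^sup>2 * (h powr (2 * rho) * h)"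
      unfolding \<beta>_def by (simp add: power2_eq_square algebra_simps)
    also have "h powr (2 * rho) * h = h powr (2 * rho + 1)" using h_pos by (simp add: powr_add)
    finally show ?thesis using nh by simp
  qed
  also have "((b - a) * (Hb a b K L)\<^sup>2 * h powr (2 * rho + 1)) powr (p/2)
      = ((b - a) * (Hb a b K L)\<^sup>2) powr (p/2) * h powr (p * (rho + 1/2))"
  proof -
    have Q: "0 \<le> (b - a) * (Hb a b K L)\<^sup>2" using ab by simp
    have "((b - a) * (Hb a b K L)\<^sup>2 * h powr (2 * rho + 1)) powr (p/2)
        = ((b - a) * (Hb a b K L)\<^sup>2) powr (p/2) * (h powr (2 * rho + 1)) powr (p/2)"
      by (rule powr_mult)
    also have "(h powr (2 * rho + 1)) powr (p/2) = h powr ((2 * rho + 1) * (p/2))" by (rule powr_powr)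
    also have "(2 * rho + 1) * (p/2) = p * (rho + 1/2)" by (simp add: algebra_simps)
    finally show ?thesis .
  qed
  also have "(\<Gamma> * N) powr p * (real DIM('a) * Cmax p * (((b - a) * (Hb a b K L)\<^sup>2) powr (p/2) * h powr (p * (rho + 1/2))) + (c2 * \<beta>) powr p)
      \<le> (\<Gamma> * N) powr p * (real DIM('a) * Cmax p * (((b - a) * (Hb a b K L)\<^sup>2) powr (p/2) * h powr (p * (rho + 1/2)))
          + (2 * L * (b - a) * Hb a b K L) powr p * h powr (p * (rho + 1/2)))"
    by (rule mult_left_mono[OF add_left_mono[OF cb]]) simp
  finally show "expectation X' \<le> (exp (2 * L * (b - a) / \<delta>) / \<delta> * (real DIM('a) + 1)) powr p *
          (real DIM('a) * Cmax p * ((b - a) * (Hb a b K L)\<^sup>2) powr (p/2) + (2 * L * (b - a) * Hb a b K L) powr p)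
          * h powr (p * (rho + 1/2))"
    unfolding \<Gamma>_def N_def by (simp add: algebra_simps mult_left_mono)
qed

end

theorem theorem2:
  fixes a b rho K L p :: real
    and M :: "'w measure"
    and tau :: "nat \<Rightarrow> 'w \<Rightarrow> real"
  assumes "a < b" and "0 < rho" and "rho \<le> 1" and "0 < K" and "0 < L" and "2 \<le> p"
    and "prob_space M" and "complete_measure M"
    and "prob_space.indep_vars M (\<lambda>_. borel) tau UNIV"
    and "\<And>j. distr M borel (tau j) = uniform_measure lborel {0..1}"
  shows "\<exists>C>0. \<forall>(n::nat) (eta::'a::euclidean_space) (f :: real \<Rightarrow> 'a \<Rightarrow> 'a) (z :: real \<Rightarrow> 'a).
           real n \<ge> real_of_int \<lfloor>b - a\<rfloor> + 1 \<longrightarrow>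
           L * ((b - a) / real n) < 1 \<longrightarrow>
           F_class a b rho K L eta f \<longrightarrow>
           z a = eta \<longrightarrow>
           (\<forall>t\<in>{a..b}. (z has_vector_derivative f t (z t)) (at t within {a..b})) \<longrightarrow>
           (let h = (b - a) / real n;
                X = (\<lambda>\<omega>. Max ((\<lambda>j. norm (z (a + real j * h)
                        - rk2_implicit a h (\<lambda>i. tau i \<omega>) eta f j) powr p) ` {0..n}))
            in integrable M X \<and>
               (prob_space.expectation M X) powr (1 / p) \<le> C * h powr (rho + 1 / 2))"
proof -
  note ab = assms(1) and rho = assms(2,3) and K = assms(4) and L = assms(5) and p = assms(6)
    and PS = assms(7) and cm = assms(8) and ind = assms(9) and dis = assms(10)
  interpret prob_space M by (rule PS)
  have taum: "\<And>i. tau i \<in> borel_measurable M" using ind unfolding indep_vars_def by blast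
  define c where "c = L * (b - a)"
  have c0: "0 < c" unfolding c_def using L ab by simp
  define \<delta> where "\<delta> = 1 - c / (of_int \<lfloor>c\<rfloor> + 1)"
  have fl: "c < of_int \<lfloor>c\<rfloor> + 1" by linarith
  have fl0: "0 < of_int \<lfloor>c\<rfloor> + (1::real)" using c0 by linarith
  have \<delta>0: "0 < \<delta>" unfolding \<delta>_def using fl fl0 by (simp add: field_simps)
  define Cst where "Cst = (exp (2 * L * (b - a) / \<delta>) / \<delta> * (real DIM('a) + 1)) powr p *
          (real DIM('a) * Cmax p * ((b - a) * (Hb a b K L)\<^sup>2) powr (p/2) + (2 * L * (b - a) * Hb a b K L) powr p)"
  have HbP: "0 < Hb a b K L" unfolding Hb_def Gb_def Zb_def using L K by (simp add: add_pos_nonneg)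
  have CstP: "0 < Cst"
  proof -
    have e1: "0 < exp (2 * L * (b - a) / \<delta>) / \<delta> * (real DIM('a) + 1)" using \<delta>0 by simp
    have A: "0 < (exp (2 * L * (b - a) / \<delta>) / \<delta> * (real DIM('a) + 1)) powr p" using e1 \<delta>0 by simp
    have B: "0 \<le> real DIM('a) * Cmax p * ((b - a) * (Hb a b K L)\<^sup>2) powr (p/2)"
      using Cmax_pos[of p] by simp
    have C: "0 < (2 * L * (b - a) * Hb a b K L) powr p" using HbP ab L by simp
    show ?thesis unfolding Cst_def by (rule mult_pos_pos[OF A add_nonneg_pos[OF B C]])
  qed
  show ?thesis
  proof (intro exI[of _ "Cst powr (1/p)"] conjI allI impI)
    show "0 < Cst powr (1/p)" using CstP by simp
    fix n :: nat and eta :: 'a and f :: "real \<Rightarrow> 'a \<Rightarrow> 'a" and z :: "real \<Rightarrow> 'a"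
    assume n: "real_of_int \<lfloor>b - a\<rfloor> + 1 \<le> real n" and Lh: "L * ((b - a) / real n) < 1"
      and F: "F_class a b rho K L eta f" and za: "z a = eta"
      and zd: "\<forall>t\<in>{a..b}. (z has_vector_derivative f t (z t)) (at t within {a..b})"
    have nba: "b - a < real n" using n by linarith
    have fl1: "0 \<le> real_of_int \<lfloor>b - a\<rfloor>" using ab by simp
    have "1 \<le> real n" using n fl1 by linarith
    then have n1: "1 \<le> n" by simp
    have npos: "0 < real n" using n1 by simp
    have h1: "(b - a) / real n < 1" using nba npos by simp
    interpret S: scheme a b rho K L eta f z n "(b - a) / real n"
      by (unfold_locales; (fact ab | fact rho | fact K | fact L | fact F | fact za | fact zd | fact n1 | fact h1 | fact Lh | rule refl)?)
    have \<delta>le: "\<delta> \<le> 1 - L * ((b - a) / real n)"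
    proof -
      have cn: "c < real n" using Lh npos unfolding c_def by (simp add: field_simps)
      have "\<lfloor>c\<rfloor> < int n" using cn by (simp add: floor_less_iff)
      then have "of_int \<lfloor>c\<rfloor> + 1 \<le> real n" by linarith
      then have "c / real n \<le> c / (of_int \<lfloor>c\<rfloor> + 1)" using c0 fl0 by (intro divide_left_mono) auto
      moreover have "L * ((b - a) / real n) = c / real n" unfolding c_def by simp
      ultimately show ?thesis unfolding \<delta>_def by linarith
    qed
    define X' where "X' \<omega> = Max ((\<lambda>j. norm (z (a + real j * ((b - a) / real n))
        - rk2_implicit a ((b - a) / real n) (\<lambda>i. S.cl01 (tau i \<omega>)) eta f j) powr p) ` {0..n})" for \<omega>
    define X where "X \<omega> = Max ((\<lambda>j. norm (z (a + real j * ((b - a) / real n))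
        - rk2_implicit a ((b - a) / real n) (\<lambda>i. tau i \<omega>) eta f j) powr p) ` {0..n})" for \<omega>
    have intX': "integrable M X'" unfolding X'_def
      by (rule S.main_bound(1)[OF PS ind dis p \<delta>0 \<delta>le])
    have EX': "expectation X' \<le> Cst * ((b - a) / real n) powr (p * (rho + 1/2))"
      unfolding X'_def Cst_def by (rule S.main_bound(2)[OF PS ind dis p \<delta>0 \<delta>le])
    have AE01: "AE \<omega> in M. \<forall>i. tau i \<omega> \<in> {0..1}"
    proof (subst AE_all_countable, intro allI)
      fix i
      have "AE y in distr M borel (tau i). y \<in> {0..1}"
        unfolding dis by (rule AE_uniform_measureI) (simp, rule AE_I2, simp)
      moreover have "(AE y in distr M borel (tau i). y \<in> {0..1}) \<longleftrightarrow> (AE \<omega> in M. tau i \<omega> \<in> {0..1})"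
        by (rule AE_distr_iff[OF taum]) simp
      ultimately show "AE \<omega> in M. tau i \<omega> \<in> {0..1}" by simp
    qed
    have AEeq: "AE \<omega> in M. X \<omega> = X' \<omega>"
    proof (rule eventually_mono[OF AE01])
      fix \<omega> assume "\<forall>i. tau i \<omega> \<in> {0..1}"
      then have "(\<lambda>i. S.cl01 (tau i \<omega>)) = (\<lambda>i. tau i \<omega>)" by (simp add: S.cl01_id)
      then show "X \<omega> = X' \<omega>" unfolding X_def X'_def by simp
    qed
    have X'm: "X' \<in> borel_measurable M" using intX' by (rule borel_measurable_integrable)
    have Xm: "X \<in> borel_measurable M" by (rule complete_measure.borel_measurable_AE_eq[OF cm X'm AEeq])
    have intX: "integrable M X" using integrable_cong_AE[OF Xm X'm AEeq] intX' by simp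
    have EX: "expectation X = expectation X'" by (rule integral_cong_AE[OF Xm X'm AEeq])
    have X'0: "0 \<le> X' \<omega>" for \<omega>
    proof -
      have "norm (z (a + real 0 * ((b - a) / real n)) - rk2_implicit a ((b - a) / real n) (\<lambda>i. S.cl01 (tau i \<omega>)) eta f 0) powr p \<le> X' \<omega>"
        unfolding X'_def by (rule Max_ge) (auto intro!: image_eqI[where x=0])
      then show ?thesis by (smt (verit) powr_ge_zero)
    qed
    have E0: "0 \<le> expectation X'" by (rule integral_nonneg_AE) (simp add: X'0)
    have hpos: "0 < (b - a) / real n" using ab npos by simp
    have "expectation X powr (1/p) \<le> (Cst * ((b - a) / real n) powr (p * (rho + 1/2))) powr (1/p)"
      unfolding EX by (rule powr_mono2) (use p E0 EX' in auto)
    also have "\<dots> = Cst powr (1/p) * (((b - a) / real n) powr (p * (rho + 1/2))) powr (1/p)"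
      by (rule powr_mult)
    also have "(((b - a) / real n) powr (p * (rho + 1/2))) powr (1/p) = ((b - a) / real n) powr (rho + 1/2)"
      using p by (simp add: powr_powr)
    finally have fin: "expectation X powr (1/p) \<le> Cst powr (1/p) * ((b - a) / real n) powr (rho + 1/2)" .
    show "let h = (b - a) / real n;
            X = (\<lambda>\<omega>. Max ((\<lambda>j. norm (z (a + real j * h)
                    - rk2_implicit a h (\<lambda>i. tau i \<omega>) eta f j) powr p) ` {0..n}))
        in integrable M X \<and>
           (prob_space.expectation M X) powr (1 / p) \<le> Cst powr (1/p) * h powr (rho + 1 / 2)"
      unfolding Let_def X_def[symmetric] using intX fin by simp
  qed
qed


end
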